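(* The Jucys-Murphy elements $\mathcal L_1,\dots,\mathcal L_{r+s}$ of $H^R_{r,s}(q,\rho)$ pairwise commute, and for every $p\in S_{r,s}[x;y]$ the element $p(\mathcal L_1,\dots,\mathcal L_{r+s})$ lies in the center of $H^R_{r,s}(q,\rho)$.
   Context: Let $R$ be an integral domain, $q,\rho\in R$ with $q^{-1},\rho^{-1}\in R$, $q\ne q^{-1}$, $\delta=\frac{\rho-\rho^{-1}}{q-q^{-1}}\in R$. $H^R_{r,s}(q,\rho)$ is the unital $R$-algebra generated by $S_1,\dots,S_{r-1},S_{r+1},\dots,S_{r+s-1},E_{r,r+1}$ with relations: $(S_i-q)(S_i+q^{-1})=0$; $S_iS_{i+1}S_i=S_{i+1}S_iS_{i+1}$; $S_iS_j=S_jS_i$ ($|i-j|>1$); $E_{r,r+1}^2=\delta E_{r,r+1}$; $E_{r,r+1}S_j=S_jE_{r,r+1}$ ($j\ne r\pm1$); $\rho E_{r,r+1}=E_{r,r+1}S_{r-1}E_{r,r+1}=E_{r,r+1}S_{r+1}E_{r,r+1}$; $E_{r,r+1}S_{r-1}^{-1}S_{r+1}E_{r,r+1}S_{r-1}=E_{r,r+1}S_{r-1}^{-1}S_{r+1}E_{r,r+1}S_{r+1}$; $S_{r-1}E_{r,r+1}S_{r-1}^{-1}S_{r+1}E_{r,r+1}=S_{r+1}E_{r,r+1}S_{r-1}^{-1}S_{r+1}E_{r,r+1}$, with $S_i^{-1}=S_i-(q-q^{-1})$. For $j\le r<k$: $E_{j,k}=(S_{k-1}\cdots S_{r+1})(S_j^{-1}\cdots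 S_{r-1}^{-1})E_{r,r+1}(S_{r-1}^{-1}\cdots S_j^{-1})(S_{r+1}\cdots S_{k-1})$. $\mathcal L_1=0$; $\mathcal L_k=S_{k-1}^{-1}\mathcal L_{k-1}S_{k-1}^{-1}+S_{k-1}^{-1}$ ($2\le k\le r$); $\mathcal L_{r+1}=\rho(-\sum_{j=1}^rE_{j,r+1}+\delta)$; $\mathcal L_k=S_{k-1}\mathcal L_{k-1}S_{k-1}+S_{k-1}$ ($r+2\le k\le r+s$). $S_{r,s}[x;y]$: polynomials in $x_1,\dots,x_r,y_1,\dots,y_s$ (coefficients in the relevant ring) symmetric in the $x$'s and in the $y$'s, with $x_r=-y_1=t$ giving a polynomial independent of $t$; evaluate $x_i\mapsto\mathcal L_i$, $y_j\mapsto\mathcal L_{r+j}$. *)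

theory Defs
  imports "HOL-Combinatorics.Permutations"
begin

text \<open>The algebra H is presented by generators and relations.  We work with an arbitrary
unital R-algebra A (a ring with a central unital ring homomorphism iota from R) together with
elements S i and E of A satisfying the defining relations.  Since H is the universal such
algebra, the statement for H is equivalent to the statement for every such datum, with
"central" read as: commutes with every element of the subalgebra generated by the
image of R, the S i and E.\<close>

definition valid_S :: "nat \<Rightarrow> nat \<Rightarrow> nat \<Rightarrow> bool" where
  "valid_S r s i \<longleftrightarrow> 1 \<le> i \<and> i \<le> r + s - 1 \<and> i \<noteq> r"

definition is_alg_map :: "('r::comm_ring_1 \<Rightarrow> 'a::ring_1) \<Rightarrow> bool" where
  "is_alg_map \<iota> \<longleftrightarrow> \<iota> 1 = 1 \<and> (\<forall>a b. \<iota> (a + b) = \<iota> a + \<iota> b)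
     \<and> (\<forall>a b. \<iota> (a * b) = \<iota> a * \<iota> b) \<and> (\<forall>a x. \<iota> a * x = x * \<iota> a)"

definition Sinv :: "('r::comm_ring_1 \<Rightarrow> 'a::ring_1) \<Rightarrow> 'r \<Rightarrow> 'r \<Rightarrow> (nat \<Rightarrow> 'a) \<Rightarrow> nat \<Rightarrow> 'a" where
  "Sinv \<iota> q qi S i = S i - \<iota> (q - qi)"

definition WB_relations ::
  "nat \<Rightarrow> nat \<Rightarrow> ('r::comm_ring_1 \<Rightarrow> 'a::ring_1) \<Rightarrow> 'r \<Rightarrow> 'r \<Rightarrow> 'r \<Rightarrow> 'r
     \<Rightarrow> (nat \<Rightarrow> 'a) \<Rightarrow> 'a \<Rightarrow> bool" where
  "WB_relations r s \<iota> q qi rho delta S E \<longleftrightarrow>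
     (\<forall>i. valid_S r s i \<longrightarrow> (S i - \<iota> q) * (S i + \<iota> qi) = 0)
   \<and> (\<forall>i. valid_S r s i \<and> valid_S r s (i+1) \<longrightarrow> S i * S (i+1) * S i = S (i+1) * S i * S (i+1))
   \<and> (\<forall>i j. valid_S r s i \<and> valid_S r s j \<and> (i + 1 < j \<or> j + 1 < i) \<longrightarrow> S i * S j = S j * S i)
   \<and> E * E = \<iota> delta * E
   \<and> (\<forall>j. valid_S r s j \<and> j \<noteq> r - 1 \<and> j \<noteq> r + 1 \<longrightarrow> E * S j = S j * E)
   \<and> (2 \<le> r \<longrightarrow> \<iota> rho * E = E * S (r-1) * E)
   \<and> (2 \<le> s \<longrightarrow> \<iota> rho * E = E * S (r+1) * E)
   \<and> (2 \<le> r \<and> 2 \<le> s \<longrightarrow>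
        E * Sinv \<iota> q qi S (r-1) * S (r+1) * E * S (r-1)
          = E * Sinv \<iota> q qi S (r-1) * S (r+1) * E * S (r+1))
   \<and> (2 \<le> r \<and> 2 \<le> s \<longrightarrow>
        S (r-1) * E * Sinv \<iota> q qi S (r-1) * S (r+1) * E
          = S (r+1) * E * Sinv \<iota> q qi S (r-1) * S (r+1) * E)"

definition Ejk :: "nat \<Rightarrow> ('r::comm_ring_1 \<Rightarrow> 'a::ring_1) \<Rightarrow> 'r \<Rightarrow> 'r \<Rightarrow> (nat \<Rightarrow> 'a) \<Rightarrow> 'a
     \<Rightarrow> nat \<Rightarrow> nat \<Rightarrow> 'a" where
  "Ejk r \<iota> q qi S E j k =
     prod_list (map S (rev [r+1..<k])) * prod_list (map (Sinv \<iota> q qi S) [j..<r]) * E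
     * prod_list (map (Sinv \<iota> q qi S) (rev [j..<r])) * prod_list (map S [r+1..<k])"

text \<open>Jucys-Murphy elements; JM ... k is \<L>_k (the value at 0 is irrelevant).\<close>
primrec JM :: "nat \<Rightarrow> ('r::comm_ring_1 \<Rightarrow> 'a::ring_1) \<Rightarrow> 'r \<Rightarrow> 'r \<Rightarrow> 'r \<Rightarrow> 'r
     \<Rightarrow> (nat \<Rightarrow> 'a) \<Rightarrow> 'a \<Rightarrow> nat \<Rightarrow> 'a" where
  "JM r \<iota> q qi rho delta S E 0 = 0"
| "JM r \<iota> q qi rho delta S E (Suc k) =
     (if k = 0 then 0
      else if Suc k \<le> r then
        Sinv \<iota> q qi S k * JM r \<iota> q qi rho delta S E k * Sinv \<iota> q qi S k + Sinv \<iota> q qi S k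
      else if Suc k = r + 1 then
        \<iota> rho * (- (\<Sum>j=1..r. Ejk r \<iota> q qi S E j (r+1)) + \<iota> delta)
      else S k * JM r \<iota> q qi rho delta S E k * S k + S k)"

inductive_set gen_alg :: "nat \<Rightarrow> nat \<Rightarrow> ('r \<Rightarrow> 'a::ring_1) \<Rightarrow> (nat \<Rightarrow> 'a) \<Rightarrow> 'a \<Rightarrow> 'a set"
  for r s \<iota> S E where
  scal: "\<iota> c \<in> gen_alg r s \<iota> S E"
| genS: "valid_S r s i \<Longrightarrow> S i \<in> gen_alg r s \<iota> S E"
| genE: "E \<in> gen_alg r s \<iota> S E"
| add: "x \<in> gen_alg r s \<iota> S E \<Longrightarrow> y \<in> gen_alg r s \<iota> S E \<Longrightarrow> x + y \<in> gen_alg r s \<iota> S E"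
| mult: "x \<in> gen_alg r s \<iota> S E \<Longrightarrow> y \<in> gen_alg r s \<iota> S E \<Longrightarrow> x * y \<in> gen_alg r s \<iota> S E"

text \<open>Polynomials in variables 1..r+s (x_i = variable i, y_j = variable r+j), given by
a finitely supported coefficient function on exponent vectors.\<close>
definition is_poly :: "nat \<Rightarrow> ((nat \<Rightarrow> nat) \<Rightarrow> 'r::comm_ring_1) \<Rightarrow> bool" where
  "is_poly n c \<longleftrightarrow> finite {m. c m \<noteq> 0} \<and>
     (\<forall>m. c m \<noteq> 0 \<longrightarrow> (\<forall>i. i \<notin> {1..n} \<longrightarrow> m i = 0))"

text \<open>Membership in S_{r,s}[x;y]: symmetric in x_1..x_r, symmetric in y_1..y_s, and
substituting x_r = t, y_1 = -t gives a polynomial independent of t (all coefficients of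
t^k with k > 0 vanish).\<close>
definition in_Srs :: "nat \<Rightarrow> nat \<Rightarrow> ((nat \<Rightarrow> nat) \<Rightarrow> 'r::comm_ring_1) \<Rightarrow> bool" where
  "in_Srs r s c \<longleftrightarrow> is_poly (r+s) c
    \<and> (\<forall>\<sigma> m. \<sigma> permutes {1..r} \<longrightarrow> c (m \<circ> \<sigma>) = c m)
    \<and> (\<forall>\<sigma> m. \<sigma> permutes {r+1..r+s} \<longrightarrow> c (m \<circ> \<sigma>) = c m)
    \<and> (\<forall>m k. m r = 0 \<and> m (r+1) = 0 \<and> 0 < k \<longrightarrow>
          (\<Sum>a\<le>k. (-1)^(k-a) * c (m(r := a, r+1 := k-a))) = 0)"

definition poly_eval :: "nat \<Rightarrow> ('r::comm_ring_1 \<Rightarrow> 'a::ring_1) \<Rightarrow> ((nat \<Rightarrow> nat) \<Rightarrow> 'r)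
    \<Rightarrow> (nat \<Rightarrow> 'a) \<Rightarrow> 'a" where
  "poly_eval n \<iota> c L = (\<Sum>m\<in>{m. c m \<noteq> 0}. \<iota> (c m) * prod_list (map (\<lambda>i. L i ^ m i) [1..<n+1]))"

end

theory Submission
  imports Defs
begin


definition cm :: "'a::ring_1 \<Rightarrow> 'a \<Rightarrow> bool" where "cm x y \<longleftrightarrow> x * y = y * x"

lemma cm_sym: "cm x y \<Longrightarrow> cm y x" by (simp add: cm_def)
lemma cm_refl[simp]: "cm x x" by (simp add: cm_def)
lemma cm_0[simp]: "cm x 0" "cm 0 x" by (simp_all add: cm_def)
lemma cm_1[simp]: "cm x 1" "cm 1 x" by (simp_all add: cm_def)
lemma cm_add: "cm x a \<Longrightarrow> cm x b \<Longrightarrow> cm x (a + b)" by (simp add: cm_def algebra_simps)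
lemma cm_diff: "cm x a \<Longrightarrow> cm x b \<Longrightarrow> cm x (a - b)" by (simp add: cm_def algebra_simps)
lemma cm_uminus: "cm x a \<Longrightarrow> cm x (- a)" by (simp add: cm_def algebra_simps)
lemma cm_mult: "cm x a \<Longrightarrow> cm x b \<Longrightarrow> cm x (a * b)"
  unfolding cm_def by (metis mult.assoc)
lemma cm_power: "cm x a \<Longrightarrow> cm x (a ^ n)"
  by (induction n) (simp_all add: cm_mult)
lemma cm_sum: "(\<And>i. i \<in> A \<Longrightarrow> cm x (f i)) \<Longrightarrow> cm x (sum f A)"
  by (induction A rule: infinite_finite_induct) (simp_all add: cm_add)
lemma cm_prod_list: "(\<And>y. y \<in> set ys \<Longrightarrow> cm x y) \<Longrightarrow> cm x (prod_list ys)"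
  by (induction ys) (simp_all add: cm_mult)
lemma cm_of_nat[simp]: "cm x (of_nat n)"
  by (induction n) (simp_all add: cm_add)
lemma cm_numeral[simp]: "cm x (numeral n)"
  by (metis cm_of_nat of_nat_numeral)
lemma cm_neg1_power[simp]: "cm x ((-1)^n)"
  by (intro cm_power cm_uminus) simp

lemma cm_D: "cm x y \<Longrightarrow> x * y = y * x" by (simp add: cm_def)

lemma power_sum_rec:
  assumes "cm x y"
  shows "x^(Suc (Suc n)) + y^(Suc (Suc n)) = (x + y) * (x^Suc n + y^Suc n) - (x*y) * (x^n + y^n)"
proof -
  have c: "y * x^n = x^n * y" using assms cm_power[of y x n] cm_sym unfolding cm_def by metis
  have c': "y * x^Suc n = x^Suc n * y" using assms cm_power[of y x "Suc n"] cm_sym unfolding cm_def by metis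
  have f1: "y * x^Suc n = x*y*x^n" by (subst c') (simp only: power_Suc mult.assoc c)
  have f2: "x*y*y^n = x*y^Suc n" by (simp only: power_Suc mult.assoc)
  have "(x + y) * (x^Suc n + y^Suc n) - (x*y) * (x^n + y^n)
     = x*x^Suc n + x*y^Suc n + y*x^Suc n + y*y^Suc n - (x*y*x^n + x*y*y^n)"
    by (simp add: distrib_left distrib_right add_ac)
  also have "\<dots> = x*x^Suc n + y*y^Suc n" by (simp only: f1 f2) (simp add: algebra_simps)
  finally show ?thesis by simp
qed

lemma cm_power_sum:
  assumes "cm x y" "cm Y (x + y)" "cm Y (x * y)"
  shows "cm Y (x^n + y^n)"
proof (induction n rule: less_induct)
  case (less n)
  show ?case
  proof (cases n)
    case 0 then show ?thesis by (simp add: one_add_one[symmetric] cm_add del: one_add_one)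
  next
    case (Suc k) note nk = this
    show ?thesis
    proof (cases k)
      case 0 then show ?thesis using nk assms by simp
    next
      case (Suc j)
      then show ?thesis using nk power_sum_rec[OF assms(1), of j] less[of j] less[of "Suc j"] assms
        by (auto intro!: cm_diff cm_mult)
    qed
  qed
qed

lemma comm_pow_pow: "cm x y \<Longrightarrow> x^a * y^b = y^b * x^a"
  using cm_power cm_sym unfolding cm_def by metis

lemma pow_mult_comm: "cm x y \<Longrightarrow> (x*y)^k = x^k * y^k"
proof (induction k)
  case (Suc k)
  have c: "y * x^k = x^k * y" using comm_pow_pow[OF cm_sym[OF Suc.prems], of 1 k] by simp
  have "(x*y)^Suc k = x*y*(x^k*y^k)" using Suc by simp
  also have "\<dots> = x * ((y * x^k) * y^k)" by (simp only: mult.assoc)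
  also have "\<dots> = x * ((x^k * y) * y^k)" by (simp only: c)
  also have "\<dots> = x^Suc k * y^Suc k" by (simp only: mult.assoc power_Suc)
  finally show ?case .
qed simp

lemma sym_mono_eq:
  assumes "cm x y" "b \<le> a"
  shows "x^a * y^b + x^b * y^a = (x*y)^b * (x^(a-b) + y^(a-b))"
proof -
  have xa: "x^a = x^b * x^(a-b)" using assms(2) by (metis le_add_diff_inverse power_add)
  have ya: "y^a = y^b * y^(a-b)" using assms(2) by (metis le_add_diff_inverse power_add)
  have c: "x^(a-b) * y^b = y^b * x^(a-b)" using comm_pow_pow[OF assms(1)] by blast
  have "x^a * y^b + x^b * y^a = x^b * (x^(a-b) * y^b) + x^b * y^b * y^(a-b)"
    by (simp only: xa ya mult.assoc)
  also have "\<dots> = x^b * y^b * (x^(a-b) + y^(a-b))"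
    by (simp only: c distrib_left mult.assoc)
  finally show ?thesis by (simp only: pow_mult_comm[OF assms(1)])
qed

lemma cm_sym_mono:
  assumes "cm x y" "cm Y (x + y)" "cm Y (x * y)"
  shows "cm Y (x^a * y^b + x^b * y^a)"
proof -
  have g: "cm Y ((x*y)^b' * (x^(a'-b') + y^(a'-b')))" for a' b'
    by (intro cm_mult cm_power assms cm_power_sum)
  show ?thesis
  proof (cases "b \<le> a")
    case True then show ?thesis using g sym_mono_eq[OF assms(1) True] by simp
  next
    case False
    then have "a \<le> b" by simp
    from sym_mono_eq[OF assms(1) this] g[where a'=b and b'=a] show ?thesis by (simp add: add.commute)
  qed
qed



lemma tri_comm:
  fixes a b w X :: "'a::ring_1"
  assumes wc: "\<And>x. w * x = x * w" and bq: "b * b = w * b + 1"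
    and br: "a * b * a = b * a * b" and Xb: "X * b = b * X"
  shows "cm a (b * (a * X * a + a) * b + b)"
proof -
  have bq': "\<And>y. b * (b * y) = w * (b * y) + y" using bq by (metis mult.assoc distrib_right mult_1)
  have br': "\<And>y. a * (b * (a * y)) = b * (a * (b * y))" using br by (metis mult.assoc)
  have Xb': "\<And>y. X * (b * y) = b * (X * y)" using Xb by (metis mult.assoc)
  have wc': "\<And>x y. x * (w * y) = w * (x * y)" using wc by (metis mult.assoc)
  have br2: "\<And>y. b * (a * (b * (b * y))) = w * (b * (a * (b * y))) + b * (a * y)"
    using bq' wc' by (simp add: algebra_simps)
  have 1: "a * (b * (a * (X * (a * b)))) = b * (a * (X * (a * (b * a))))"
  proof -
    have "a * (b * (a * (X * (a * b)))) = b * (a * (b * (X * (a * b))))" by (rule br')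
    also have "\<dots> = b * (a * (X * (b * (a * b))))" by (simp only: Xb')
    also have "\<dots> = b * (a * (X * (a * (b * a))))" using br' [of 1] by (simp add: mult.assoc)
    finally show ?thesis .
  qed
  have 2: "a * (b * (a * b)) + a * b = (b * (a * b)) * a + b * a"
  proof -
    have "a * (b * (a * b)) = b * (a * (b * b))" using br' by (metis mult_1_right)
    also have "\<dots> = w * (b * (a * b)) + b * a" using bq by (simp add: algebra_simps wc')
    finally have e1: "a * (b * (a * b)) = w * (b * (a * b)) + b * a" .
    have "(b * (a * b)) * a = b * (b * (a * b))" using br by (simp add: mult.assoc)
    also have "\<dots> = w * (b * (a * b)) + a * b" using bq' by simp
    finally have e2: "(b * (a * b)) * a = w * (b * (a * b)) + a * b" .
    show ?thesis using e1 e2 by (simp add: algebra_simps)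
  qed
  show ?thesis unfolding cm_def
    using 1 2 by (simp add: algebra_simps)
qed

lemma pair_comm:
  fixes t w X :: "'a::ring_1"
  assumes wc: "\<And>x. w * x = x * w" and tq: "t * t = w * t + 1"
    and XL: "cm X (t * X * t + t)"
  shows "cm t (X + (t * X * t + t))" "cm t (X * (t * X * t + t))"
proof -
  define L' where "L' = t * X * t + t"
  have wc': "\<And>x y. x * (w * y) = w * (x * y)" using wc by (metis mult.assoc)
  have tq': "\<And>y. t * (t * y) = w * (t * y) + y" using tq by (metis mult.assoc distrib_right mult_1)
  have e1: "t * L' = w * (t * (X * t)) + X * t + w * t + 1"
    unfolding L'_def by (simp add: algebra_simps tq' tq)
  have e2: "L' * t = w * (t * (X * t)) + t * X + w * t + 1"
    unfolding L'_def by (simp add: algebra_simps tq' tq wc' wc)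
  show "cm t (X + (t * X * t + t))" unfolding cm_def L'_def[symmetric]
    using e1 e2 by (simp add: algebra_simps)
  have f1: "t * X = L' * t - w * L' - 1" using e2 unfolding L'_def by (simp add: algebra_simps)
  have f2: "t * L' = X * t + w * L' + 1" using e1 unfolding L'_def by (simp add: algebra_simps)
  have XL': "X * L' = L' * X" using XL unfolding cm_def L'_def .
  have "t * (X * L') = (L' * t - w * L' - 1) * L'" by (simp add: f1 mult.assoc[symmetric])
  also have "\<dots> = L' * (t * L') - w * (L' * L') - L'" by (simp add: algebra_simps)
  also have "\<dots> = L' * (X * t)" by (simp add: f2 algebra_simps wc')
  also have "\<dots> = X * L' * t" by (simp add: XL' mult.assoc)
  finally show "cm t (X * (t * X * t + t))" unfolding cm_def L'_def[symmetric] by (simp add: mult.assoc)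
qed

locale hecke =
  fixes T :: "nat \<Rightarrow> 'a::ring_1" and w :: 'a and n :: nat and L :: "nat \<Rightarrow> 'a"
  assumes wc: "\<And>x. w * x = x * w"
    and quad: "\<And>i. 1 \<le> i \<Longrightarrow> i < n \<Longrightarrow> T i * T i = w * T i + 1"
    and braid: "\<And>i. 1 \<le> i \<Longrightarrow> i+1 < n \<Longrightarrow> T i * T (i+1) * T i = T (i+1) * T i * T (i+1)"
    and far: "\<And>i j. 1 \<le> i \<Longrightarrow> j < n \<Longrightarrow> i+1 < j \<Longrightarrow> cm (T i) (T j)"
    and Bc: "\<And>j. 2 \<le> j \<Longrightarrow> j < n \<Longrightarrow> cm (L 1) (T j)"
    and B2: "2 \<le> n \<Longrightarrow> cm (L 1) (L 2)"
    and rec: "\<And>k. 1 \<le> k \<Longrightarrow> k < n \<Longrightarrow> L (Suc k) = T k * L k * T k + T k"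
begin

lemma G:
  assumes "cm X (L 1)" "\<And>j. 1 \<le> j \<Longrightarrow> j < k \<Longrightarrow> cm X (T j)" "1 \<le> k" "k \<le> n"
  shows "cm X (L k)"
  using assms(2-4)
proof (induction k)
  case 0 then show ?case by simp
next
  case (Suc k)
  show ?case
  proof (cases "k = 0")
    case True then show ?thesis using assms(1) by simp
  next
    case False
    then have r: "L (Suc k) = T k * L k * T k + T k" using rec Suc.prems by simp
    have "cm X (L k)" using Suc False by simp
    moreover have "cm X (T k)" using Suc.prems False by simp
    ultimately show ?thesis unfolding r by (intro cm_add cm_mult)
  qed
qed

lemma a1:
  assumes "1 \<le> k" "k < j" "j < n"
  shows "cm (T j) (L k)"
proof (rule G)
  show "cm (T j) (L 1)" using Bc[of j] assms by (simp add: cm_sym)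
  show "cm (T j) (T i)" if "1 \<le> i" "i < k" for i
    using far[of i j] that assms by (simp add: cm_sym)
qed (use assms in auto)

lemma a2:
  assumes "1 \<le> j" "j + 2 \<le> k" "k \<le> n"
  shows "cm (T j) (L k)"
proof -
  have "cm (T j) (L (j + 2 + d))" if "j + 2 + d \<le> n" for d
    using that
  proof (induction d)
    case 0
    have r1: "L (Suc j) = T j * L j * T j + T j" using rec[of j] 0 assms by simp
    have r2: "L (Suc (Suc j)) = T (j+1) * L (Suc j) * T (j+1) + T (j+1)" using rec[of "j+1"] 0 assms by simp
    have "cm (L j) (T (j+1))" using a1[of j "j+1"] 0 assms by (simp add: cm_sym)
    then have "cm (T j) (T (j+1) * (T j * L j * T j + T j) * T (j+1) + T (j+1))"
      using tri_comm[of w "T (j+1)" "T j" "L j"] wc quad[of "j+1"] braid[of j] assms 0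
      by (simp add: cm_def)
    then show ?case using r1 r2 by (simp add: numeral_2_eq_2)
  next
    case (Suc d)
    have r: "L (j + 2 + Suc d) = T (j+2+d) * L (j+2+d) * T (j+2+d) + T (j+2+d)"
      using rec[of "j+2+d"] Suc.prems by simp
    have "cm (T j) (T (j+2+d))" using far[of j "j+2+d"] Suc.prems assms by simp
    then show ?case unfolding r using Suc by (auto intro!: cm_add cm_mult)
  qed
  moreover have "j + 2 + (k - j - 2) = k" using assms by simp
  ultimately show ?thesis using assms by metis
qed

lemma Tcomm:
  assumes "1 \<le> j" "j < n" "1 \<le> k" "k \<le> n" "k \<noteq> j" "k \<noteq> j + 1"
  shows "cm (T j) (L k)"
proof (cases "k < j")
  case True then show ?thesis using a1 assms by simp
next
  case False then show ?thesis using a2 assms by simp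
qed

lemma b1:
  assumes "1 \<le> l" "l \<le> n"
  shows "cm (L 1) (L l)"
  using assms
proof (induction l)
  case 0 then show ?case by simp
next
  case (Suc l)
  show ?case
  proof (cases "l \<le> 1")
    case True
    then have "l = 0 \<or> l = 1" by auto
    then show ?thesis using B2 Suc.prems by (auto simp: numeral_2_eq_2)
  next
    case False
    have r: "L (Suc l) = T l * L l * T l + T l" using rec[of l] Suc.prems False by simp
    have "cm (L 1) (T l)" using Bc[of l] Suc.prems False by simp
    then show ?thesis unfolding r using Suc False by (auto intro!: cm_add cm_mult)
  qed
qed

lemma Lcomm:
  assumes "1 \<le> k" "k \<le> n" "1 \<le> l" "l \<le> n"
  shows "cm (L k) (L l)"
proof -
  have *: "cm (L l) (L k)" if "1 \<le> k" "k < l" "l \<le> n" for k l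
  proof (rule G)
    show "cm (L l) (L 1)" using b1[of l] that by (simp add: cm_sym)
    show "cm (L l) (T j)" if "1 \<le> j" "j < k" for j
      using a2[of j l] that \<open>k < l\<close> \<open>l \<le> n\<close> by (simp add: cm_sym)
  qed (use that in auto)
  show ?thesis
  proof (cases k l rule: linorder_cases)
    case less then show ?thesis using *[of k l] assms by (simp add: cm_sym)
  next
    case greater then show ?thesis using *[of l k] assms by simp
  qed simp
qed

lemma pair:
  assumes "1 \<le> j" "j < n"
  shows "cm (T j) (L j + L (Suc j))" "cm (T j) (L j * L (Suc j))"
proof -
  have r: "L (Suc j) = T j * L j * T j + T j" using rec assms by simp
  have "cm (L j) (L (Suc j))" using Lcomm assms by simp
  then have c: "cm (L j) (T j * L j * T j + T j)" using r by simp
  show "cm (T j) (L j + L (Suc j))" using pair_comm(1)[OF wc quad c] assms r by simp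
  show "cm (T j) (L j * L (Suc j))" using pair_comm(2)[OF wc quad c] assms r by simp
qed

end



lemma alg_props:
  assumes "is_alg_map \<iota>"
  shows "\<iota> 0 = 0" "\<iota> 1 = 1" "\<iota> (a + b) = \<iota> a + \<iota> b" "\<iota> (a * b) = \<iota> a * \<iota> b"
    "\<iota> (- a) = - \<iota> a" "\<iota> (a - b) = \<iota> a - \<iota> b" "cm x (\<iota> a)" "\<iota> a * x = x * \<iota> a"
proof -
  have add: "\<And>a b. \<iota> (a + b) = \<iota> a + \<iota> b" using assms unfolding is_alg_map_def by blast
  show z: "\<iota> 0 = 0" using add[of 0 0] by simp
  show "\<iota> 1 = 1" using assms unfolding is_alg_map_def by blast
  show "\<iota> (a + b) = \<iota> a + \<iota> b" by (rule add)
  show "\<iota> (a * b) = \<iota> a * \<iota> b" using assms unfolding is_alg_map_def by blast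
  have n: "\<iota> (- a) = - \<iota> a" for a using add[of a "-a"] z by (simp add: eq_neg_iff_add_eq_0 add.commute)
  show "\<iota> (- a) = - \<iota> a" by (rule n)
  show "\<iota> (a - b) = \<iota> a - \<iota> b" using add[of a "-b"] n[of b] by simp
  show "\<iota> a * x = x * \<iota> a" using assms unfolding is_alg_map_def by blast
  then show "cm x (\<iota> a)" by (simp add: cm_def)
qed

lemma alg_sum: "is_alg_map \<iota> \<Longrightarrow> \<iota> (sum f A) = sum (\<lambda>x. \<iota> (f x)) A"
  by (induction A rule: infinite_finite_induct) (simp_all add: alg_props(1-6))

lemma alg_power: "is_alg_map \<iota> \<Longrightarrow> \<iota> (a ^ k) = \<iota> a ^ k"
  by (induction k) (simp_all add: alg_props(1-6))

lemma sum_invol_zero: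
  assumes "finite U" "\<And>x. x \<in> U \<Longrightarrow> s x \<in> U" "\<And>x. x \<in> U \<Longrightarrow> s (s x) = x"
    "\<And>x. x \<in> U \<Longrightarrow> g x + g (s x) = (0::'a::ab_group_add)"
    "\<And>x. x \<in> U \<Longrightarrow> s x = x \<Longrightarrow> g x = 0"
  shows "sum g U = 0"
  using assms
proof (induction "card U" arbitrary: U rule: less_induct)
  case less
  note P = less.prems
  show ?case
  proof (cases "U = {}")
    case True then show ?thesis by simp
  next
    case False
    then obtain x where x: "x \<in> U" by auto
    have sx: "s x \<in> U" using P(2) x by blast
    define V where "V = U - {x, s x}"
    have V: "V \<subseteq> U" unfolding V_def by blast
    have fV: "finite V" using P(1) V finite_subset by blast
    have sV: "s y \<in> V" if "y \<in> V" for y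
    proof -
      have y: "y \<in> U" "y \<noteq> x" "y \<noteq> s x" using that unfolding V_def by auto
      have "s y \<noteq> x" using P(3)[of y] P(3)[of x] y x by metis
      moreover have "s y \<noteq> s x" using P(3)[of y] P(3)[of x] y x by metis
      ultimately show ?thesis using P(2)[OF y(1)] unfolding V_def by blast
    qed
    have cV: "card V < card U" using x V P(1) unfolding V_def by (intro psubset_card_mono) auto
    have gV: "sum g V = 0"
    proof (rule less.hyps[OF cV fV])
      show "\<And>y. y \<in> V \<Longrightarrow> s y \<in> V" by (rule sV)
      show "\<And>y. y \<in> V \<Longrightarrow> s (s y) = y" using P(3) V by blast
      show "\<And>y. y \<in> V \<Longrightarrow> g y + g (s y) = 0" using P(4) V by blast
      show "\<And>y. y \<in> V \<Longrightarrow> s y = y \<Longrightarrow> g y = 0" using P(5) V by blast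
    qed
    show ?thesis
    proof (cases "s x = x")
      case True
      have "U = insert x V" unfolding V_def using x True by blast
      moreover have "x \<notin> V" unfolding V_def by blast
      ultimately have "sum g U = g x + sum g V" using fV by simp
      then show ?thesis using gV P(5)[OF x True] by simp
    next
      case False
      have "U = insert x (insert (s x) V)" unfolding V_def using x sx by blast
      moreover have "x \<notin> insert (s x) V" using False unfolding V_def by auto
      moreover have "s x \<notin> V" unfolding V_def by blast
      ultimately have "sum g U = g x + (g (s x) + sum g V)" using fV by simp
      then show ?thesis using gV P(4)[OF x] by (simp add: add.assoc[symmetric])
    qed
  qed
qed

lemma upt_split3:
  assumes "1 \<le> i" "i + 1 \<le> n"
  shows "[1..<n+1] = [1..<i] @ i # (i+1) # [i+2..<n+1]"
proof -
  have e: "i + (n + 1 - i) = n + 1" using assms by simp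
  have "[1..<n+1] = [1..<i + (n + 1 - i)]" by (simp only: e)
  also have "\<dots> = [1..<i] @ [i..<i + (n + 1 - i)]" by (rule upt_add_eq_append) (use assms in simp)
  also have "\<dots> = [1..<i] @ [i..<n+1]" by (simp only: e)
  finally have "[1..<n+1] = [1..<i] @ [i..<n+1]" .
  also have "[i..<n+1] = i # (i+1) # [i+2..<n+1]" using assms by (simp add: upt_conv_Cons)
  finally show ?thesis .
qed

definition mono_ev :: "nat \<Rightarrow> (nat \<Rightarrow> 'a::ring_1) \<Rightarrow> (nat \<Rightarrow> nat) \<Rightarrow> 'a" where
  "mono_ev n L m = prod_list (map (\<lambda>i. L i ^ m i) [1..<n+1])"

lemma poly_eval_alt: "poly_eval n \<iota> c L = (\<Sum>m\<in>{m. c m \<noteq> 0}. \<iota> (c m) * mono_ev n L m)"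
  by (simp add: poly_eval_def mono_ev_def)

lemma mono_split:
  assumes "1 \<le> i" "i + 1 \<le> n"
  shows "mono_ev n L m = prod_list (map (\<lambda>k. L k ^ m k) [1..<i]) * (L i ^ m i * L (i+1) ^ m (i+1))
     * prod_list (map (\<lambda>k. L k ^ m k) [i+2..<n+1])"
  unfolding mono_ev_def upt_split3[OF assms] by (simp add: mult.assoc)

lemma cm_poly_from_sum:
  assumes alg: "is_alg_map \<iota>"
    and z: "(\<Sum>m\<in>{m. c m \<noteq> 0}. \<iota> (c m) * (Y * mono_ev n L m - mono_ev n L m * Y)) = 0"
  shows "cm Y (poly_eval n \<iota> c L)"
proof -
  have t: "Y * (\<iota> (c m) * M) - \<iota> (c m) * M * Y = \<iota> (c m) * (Y * M - M * Y)" for m M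
  proof -
    have "Y * (\<iota> (c m) * M) = \<iota> (c m) * (Y * M)"
      using alg_props(8)[OF alg, of "c m" Y] by (metis mult.assoc)
    then show ?thesis by (simp add: right_diff_distrib mult.assoc)
  qed
  have "Y * poly_eval n \<iota> c L - poly_eval n \<iota> c L * Y
      = (\<Sum>m\<in>{m. c m \<noteq> 0}. \<iota> (c m) * (Y * mono_ev n L m - mono_ev n L m * Y))"
    unfolding poly_eval_alt sum_distrib_left sum_distrib_right sum_subtractf[symmetric] t ..
  then show ?thesis using z unfolding cm_def by simp
qed

lemma sym_poly_comm:
  assumes alg: "is_alg_map \<iota>" and fin: "finite {m. c m \<noteq> 0}"
    and sym: "\<And>m. c (m \<circ> transpose i (i+1)) = c m"
    and i: "1 \<le> i" "i + 1 \<le> n"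
    and Yk: "\<And>k. 1 \<le> k \<Longrightarrow> k \<le> n \<Longrightarrow> k \<noteq> i \<Longrightarrow> k \<noteq> i+1 \<Longrightarrow> cm Y (L k)"
    and LL: "cm (L i) (L (i+1))" and e1: "cm Y (L i + L (i+1))" and e2: "cm Y (L i * L (i+1))"
  shows "cm Y (poly_eval n \<iota> c L)"
proof (rule cm_poly_from_sum[OF alg])
  define U where "U = {m. c m \<noteq> 0}"
  define A where "A m = prod_list (map (\<lambda>k. L k ^ m k) [1..<i])" for m :: "nat \<Rightarrow> nat"
  define C where "C m = prod_list (map (\<lambda>k. L k ^ m k) [i+2..<n+1])" for m :: "nat \<Rightarrow> nat"
  define P where "P m = L i ^ m i * L (i+1) ^ m (i+1)" for m :: "nat \<Rightarrow> nat"
  define s where "s m = m \<circ> transpose i (i+1)" for m :: "nat \<Rightarrow> nat"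
  define g where "g m = \<iota> (c m) * (Y * mono_ev n L m - mono_ev n L m * Y)" for m
  have M: "mono_ev n L m = A m * P m * C m" for m
    unfolding A_def C_def P_def by (rule mono_split[OF i])
  have cA: "cm Y (A m)" for m unfolding A_def
    by (rule cm_prod_list) (use Yk i in \<open>auto intro!: cm_power\<close>)
  have cC: "cm Y (C m)" for m unfolding C_def
    by (rule cm_prod_list) (use Yk i in \<open>auto intro!: cm_power\<close>)
  have g: "g m = \<iota> (c m) * (A m * (Y * P m - P m * Y) * C m)" for m
  proof -
    have a: "Y * (A m * z) = A m * (Y * z)" for z using cA[of m] unfolding cm_def by (metis mult.assoc)
    have c: "C m * Y = Y * C m" using cC[of m] unfolding cm_def by simp
    have "Y * (A m * P m * C m) = A m * (Y * P m) * C m" by (simp only: mult.assoc a)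
    moreover have "A m * P m * C m * Y = A m * (P m * Y) * C m" by (simp only: mult.assoc c)
    ultimately show ?thesis unfolding g_def M by (simp add: right_diff_distrib left_diff_distrib)
  qed
  have s1: "s m i = m (i+1)" "s m (i+1) = m i" for m unfolding s_def by simp_all
  have s2: "s m k = m k" if "k \<noteq> i" "k \<noteq> i+1" for m k unfolding s_def using that by simp
  have As: "A (s m) = A m" for m unfolding A_def by (intro arg_cong[where f=prod_list] map_cong) (auto simp: s2)
  have Cs: "C (s m) = C m" for m unfolding C_def by (intro arg_cong[where f=prod_list] map_cong) (auto simp: s2)
  have ss: "s (s m) = m" for m unfolding s_def by (simp add: comp_assoc)
  have cs: "c (s m) = c m" for m unfolding s_def by (rule sym)
  have "sum g U = 0"
  proof (rule sum_invol_zero[where s=s])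
    show "finite U" using fin U_def by simp
    show "s x \<in> U" if "x \<in> U" for x using that cs U_def by simp
    show "s (s x) = x" for x by (rule ss)
    show "g x + g (s x) = 0" for x
    proof -
      have "cm Y (P x + P (s x))" unfolding P_def s1 using cm_sym_mono[OF LL e1 e2] by simp
      then have "Y * P x - P x * Y + (Y * P (s x) - P (s x) * Y) = 0"
        unfolding cm_def by (simp add: algebra_simps)
      then have "A x * (Y * P x - P x * Y) * C x + A x * (Y * P (s x) - P (s x) * Y) * C x = 0"
        by (metis distrib_left distrib_right mult_zero_left mult_zero_right)
      then show ?thesis unfolding g As Cs cs by (metis distrib_left mult_zero_right)
    qed
    show "g x = 0" if "s x = x" for x
    proof -
      have "x (i+1) = x i" using s1[of x] that by simp
      then have "P x = (L i * L (i+1)) ^ x i" unfolding P_def using pow_mult_comm[OF LL, of "x i"] by simp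
      then have "cm Y (P x)" using e2 by (simp add: cm_power)
      then show ?thesis unfolding g cm_def by simp
    qed
  qed
  then show "(\<Sum>m\<in>{m. c m \<noteq> 0}. \<iota> (c m) * (Y * mono_ev n L m - mono_ev n L m * Y)) = 0"
    unfolding U_def g_def .
qed


lemma Y_left_pow:
  assumes "cm x y" "Y * (x + y) = 0"
  shows "Y * (x^a * y^b) = (-1)^b * (Y * x^(a+b))"
proof (induction b arbitrary: a)
  case 0 then show ?case by simp
next
  case (Suc b)
  have Yy: "Y * y = - (Y * x)" using assms(2) by (simp add: distrib_left eq_neg_iff_add_eq_0 add.commute)
  have c: "y * x^(a+b) = x^(a+b) * y" using comm_pow_pow[OF cm_sym[OF assms(1)], of 1 "a+b"] by simp
  have "Y * (x^a * y^Suc b) = Y * (x^a * y^b) * y" by (simp only: mult.assoc power_Suc2)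
  also have "\<dots> = (-1)^b * (Y * (x^(a+b) * y))" by (simp add: Suc mult.assoc)
  also have "\<dots> = (-1)^b * (Y * y * x^(a+b))" by (simp add: c mult.assoc)
  also have "\<dots> = (-1)^Suc b * (Y * x^(a + Suc b))" by (simp add: Yy mult.assoc)
  finally show ?case .
qed

lemma Y_right_pow:
  assumes "cm x y" "(x + y) * Y = 0"
  shows "(x^a * y^b) * Y = (-1)^b * (x^(a+b) * Y)"
proof (induction b arbitrary: a)
  case 0 then show ?case by simp
next
  case (Suc b)
  have Yy: "y * Y = - (x * Y)" using assms(2) by (simp add: distrib_right eq_neg_iff_add_eq_0 add.commute)
  have c: "y^b * x = x * y^b" using comm_pow_pow[OF assms(1), of 1 b] by simp
  have "(x^a * y^Suc b) * Y = x^a * y^b * (y * Y)" by (simp only: mult.assoc power_Suc2)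
  also have "\<dots> = - (x^a * (y^b * x) * Y)" by (simp add: Yy mult.assoc)
  also have "\<dots> = - (x^Suc a * y^b * Y)" by (simp only: c mult.assoc[symmetric] power_Suc2[symmetric])
  also have "\<dots> = (-1)^Suc b * (x^(a + Suc b) * Y)" using Suc[of "Suc a"] by simp
  finally show ?case .
qed

lemma E_poly_comm:
  assumes alg: "is_alg_map \<iota>" and fin: "finite {m. c m \<noteq> 0}"
    and canc: "\<forall>m k. m p = 0 \<and> m (p+1) = 0 \<and> 0 < k \<longrightarrow>
          (\<Sum>a\<le>k. (-1)^(k-a) * c (m(p := a, p+1 := k-a))) = 0"
    and p: "1 \<le> p" "p + 1 \<le> n"
    and Yk: "\<And>k. 1 \<le> k \<Longrightarrow> k \<le> n \<Longrightarrow> k \<noteq> p \<Longrightarrow> k \<noteq> p+1 \<Longrightarrow> cm Y (L k)"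
    and LL: "cm (L p) (L (p+1))" and Y1: "Y * (L p + L (p+1)) = 0" and Y2: "(L p + L (p+1)) * Y = 0"
  shows "cm Y (poly_eval n \<iota> c L)"
proof (rule cm_poly_from_sum[OF alg])
  define U where "U = {m. c m \<noteq> 0}"
  define A where "A m = prod_list (map (\<lambda>k. L k ^ m k) [1..<p])" for m :: "nat \<Rightarrow> nat"
  define C where "C m = prod_list (map (\<lambda>k. L k ^ m k) [p+2..<n+1])" for m :: "nat \<Rightarrow> nat"
  define P where "P m = L p ^ m p * L (p+1) ^ m (p+1)" for m :: "nat \<Rightarrow> nat"
  define D where "D k = Y * L p ^ k - L p ^ k * Y" for k
  define key where "key m = (m(p := 0, p+1 := 0), m p + m (p+1))" for m :: "nat \<Rightarrow> nat"
  define h where "h q = A (fst q) * D (snd q) * C (fst q)" for q :: "(nat \<Rightarrow> nat) \<times> nat"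
  define f where "f m = c m * (-1)^(m (p+1))" for m
  define g where "g m = \<iota> (c m) * (Y * mono_ev n L m - mono_ev n L m * Y)" for m
  have M: "mono_ev n L m = A m * P m * C m" for m
    unfolding A_def C_def P_def by (rule mono_split[OF p])
  have cA: "cm Y (A m)" for m unfolding A_def
    by (rule cm_prod_list) (use Yk p in \<open>auto intro!: cm_power\<close>)
  have cC: "cm Y (C m)" for m unfolding C_def
    by (rule cm_prod_list) (use Yk p in \<open>auto intro!: cm_power\<close>)
  have AK: "A (fst (key m)) = A m" for m unfolding A_def key_def
    by (intro arg_cong[where f=prod_list] map_cong) auto
  have CK: "C (fst (key m)) = C m" for m unfolding C_def key_def
    by (intro arg_cong[where f=prod_list] map_cong) auto
  have YP: "Y * P m - P m * Y = (-1)^(m (p+1)) * D (m p + m (p+1))" for m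
    unfolding P_def D_def Y_left_pow[OF LL Y1] Y_right_pow[OF LL Y2] by (simp add: right_diff_distrib)
  have g: "g m = \<iota> (f m) * h (key m)" for m
  proof -
    have a: "Y * (A m * z) = A m * (Y * z)" for z using cA[of m] unfolding cm_def by (metis mult.assoc)
    have c: "C m * Y = Y * C m" using cC[of m] unfolding cm_def by simp
    have "Y * (A m * P m * C m) = A m * (Y * P m) * C m" by (simp only: mult.assoc a)
    moreover have "A m * P m * C m * Y = A m * (P m * Y) * C m" by (simp only: mult.assoc c)
    ultimately have "g m = \<iota> (c m) * (A m * (Y * P m - P m * Y) * C m)"
      unfolding g_def M by (simp add: right_diff_distrib left_diff_distrib)
    also have "\<dots> = \<iota> (c m) * ((-1)^(m (p+1)) * h (key m))"
    proof -
      have e: "A m * ((-1)^(m (p+1)) * z) = (-1)^(m (p+1)) * (A m * z)" for z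
        using cm_neg1_power[of "A m" "m (p+1)"] unfolding cm_def by (metis mult.assoc)
      show ?thesis unfolding YP h_def AK CK using e by (simp add: mult.assoc key_def)
    qed
    also have "\<dots> = \<iota> (f m) * h (key m)"
      unfolding f_def by (simp add: alg_props(4)[OF alg] alg_power[OF alg] alg_props(1,2,5)[OF alg] mult.assoc)
    finally show ?thesis .
  qed
  have finU: "finite U" using fin U_def by simp
  have "sum g U = (\<Sum>q\<in>key ` U. sum g {m \<in> U. key m = q})"
    by (rule sum.image_gen[OF finU])
  also have "\<dots> = (\<Sum>q\<in>key ` U. \<iota> (sum f {m \<in> U. key m = q}) * h q)"
  proof (rule sum.cong[OF refl])
    fix q assume "q \<in> key ` U"
    have "sum g {m \<in> U. key m = q} = (\<Sum>m\<in>{m \<in> U. key m = q}. \<iota> (f m) * h q)"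
      by (rule sum.cong) (auto simp: g)
    also have "\<dots> = \<iota> (sum f {m \<in> U. key m = q}) * h q"
      by (simp add: alg_sum[OF alg] sum_distrib_right)
    finally show "sum g {m \<in> U. key m = q} = \<iota> (sum f {m \<in> U. key m = q}) * h q" .
  qed
  also have "\<dots> = 0"
  proof (rule sum.neutral, rule ballI)
    fix q assume q: "q \<in> key ` U"
    obtain m' k where qq: "q = (m', k)" by (cases q)
    have m'0: "m' p = 0" "m' (p+1) = 0" using q qq unfolding key_def by auto
    show "\<iota> (sum f {m \<in> U. key m = q}) * h q = 0"
    proof (cases "k = 0")
      case True then show ?thesis unfolding h_def D_def qq by simp
    next
      case False
      define \<phi> where "\<phi> a = m'(p := a, p+1 := k - a)" for a
      have inj: "inj_on \<phi> {..k}"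
      proof (rule inj_onI)
        fix a b assume "\<phi> a = \<phi> b"
        then have "\<phi> a p = \<phi> b p" by simp
        then show "a = b" unfolding \<phi>_def by simp
      qed
      have sub: "{m \<in> U. key m = q} \<subseteq> \<phi> ` {..k}"
      proof
        fix m assume "m \<in> {m \<in> U. key m = q}"
        then have km: "m(p := 0, p+1 := 0) = m'" "m p + m (p+1) = k" unfolding key_def qq by auto
        have mm: "m' x = m x" if "x \<noteq> p" "x \<noteq> p+1" for x
          using fun_cong[OF km(1), of x] that by simp
        have "\<phi> (m p) = m" unfolding \<phi>_def fun_eq_iff using km(2) mm by auto
        moreover have "m p \<in> {..k}" using km by simp
        ultimately show "m \<in> \<phi> ` {..k}" by (metis image_eqI)
      qed
      have out: "f m = 0" if "m \<in> \<phi> ` {..k} - {m \<in> U. key m = q}" for m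
      proof -
        from that obtain a where a: "a \<le> k" "m = \<phi> a" "m \<notin> {m \<in> U. key m = q}" by auto
        have "key m = q" unfolding a(2) key_def qq \<phi>_def using m'0 a(1) by (auto simp: fun_eq_iff)
        then have "m \<notin> U" using a by auto
        then show "f m = 0" unfolding U_def f_def by simp
      qed
      have "sum f {m \<in> U. key m = q} = sum f (\<phi> ` {..k})"
        by (rule sum.mono_neutral_left[OF _ sub]) (use out in auto)
      also have "\<dots> = (\<Sum>a\<le>k. f (\<phi> a))" by (rule sum.reindex[OF inj, unfolded comp_def])
      also have "\<dots> = (\<Sum>a\<le>k. (-1)^(k-a) * c (m'(p := a, p+1 := k-a)))"
        unfolding f_def \<phi>_def by (intro sum.cong) (auto simp: mult.commute)
      also have "\<dots> = 0" using canc m'0 False by auto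
      finally show ?thesis by (simp add: alg_props(1)[OF alg])
    qed
  qed
  finally show "(\<Sum>m\<in>{m. c m \<noteq> 0}. \<iota> (c m) * (Y * mono_ev n L m - mono_ev n L m * Y)) = 0"
    unfolding U_def g_def .
qed



lemma inv_braid:
  fixes a b w :: "'a::ring_1"
  assumes aw: "a * w = w * a" and bw: "b * w = w * b"
    and aa: "a * a = w * a + 1" and bb: "b * b = w * b + 1" and br: "a * b * a = b * a * b"
  shows "(a - w) * (b - w) * (a - w) = (b - w) * (a - w) * (b - w)"
proof -
  have aw': "a * (w * y) = w * (a * y)" for y using aw by (metis mult.assoc)
  have bw': "b * (w * y) = w * (b * y)" for y using bw by (metis mult.assoc)
  have br': "a * (b * a) = b * (a * b)" using br by (simp add: mult.assoc)
  have "(a - w) * (b - w) * (a - w) = a * (b * a) - w * (a * b) - w * (b * a) - w * (a * a) + w * (w * a) + w * (w * b) + w * (w * a) - w * (w * w)"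
    by (simp add: algebra_simps aw' bw' aw bw)
  also have "\<dots> = b * (a * b) - w * (a * b) - w * (b * a) - w * (b * b) + w * (w * b) + w * (w * a) + w * (w * b) - w * (w * w)"
    by (simp add: br' aa bb algebra_simps)
  also have "\<dots> = (b - w) * (a - w) * (b - w)"
    by (simp add: algebra_simps aw' bw' aw bw)
  finally show ?thesis .
qed

lemma conj_pair:
  fixes t w X :: "'a::ring_1"
  assumes tw: "\<And>y. y * w = w * y" and tq: "t * t = w * t + 1"
  shows "cm t (X + t * X * t)"
proof -
  have tq': "t * (t * y) = w * (t * y) + y" for y using tq by (metis mult.assoc distrib_right mult_1)
  have tw': "x * (w * y) = w * (x * y)" for x y using tw by (metis mult.assoc)
  have "t * (X + t * X * t) = t * X + w * (t * (X * t)) + X * t"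
    by (simp add: algebra_simps tq')
  moreover have "(X + t * X * t) * t = t * X + w * (t * (X * t)) + X * t"
    by (simp add: algebra_simps tq tw tw')
  ultimately show ?thesis unfolding cm_def by simp
qed

primrec Wp :: "(nat \<Rightarrow> 'a::ring_1) \<Rightarrow> nat \<Rightarrow> nat \<Rightarrow> 'a" where
  "Wp t 0 k = t (k - 1)"
| "Wp t (Suc d) k = t (k - 2 - d) * Wp t d k * t (k - 2 - d)"

locale wb =
  fixes r s :: nat and q qi rho rhoi delta :: "'r::idom"
    and \<iota> :: "'r \<Rightarrow> 'a::ring_1" and S :: "nat \<Rightarrow> 'a" and E :: 'a
  assumes r1: "1 \<le> r" and s1: "1 \<le> s"
    and qq: "q * qi = 1" and rr: "rho * rhoi = 1" and qne: "q \<noteq> qi"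
    and dd: "delta * (q - qi) = rho - rhoi"
    and alg: "is_alg_map \<iota>"
    and rel: "WB_relations r s \<iota> q qi rho delta S E"
begin

abbreviation "z \<equiv> \<iota> (q - qi)"
abbreviation "T \<equiv> Sinv \<iota> q qi S"
abbreviation "L \<equiv> JM r \<iota> q qi rho delta S E"
abbreviation "Ej j \<equiv> Ejk r \<iota> q qi S E j (Suc r)"

lemma T_def: "T j = S j - z" by (simp add: Sinv_def)

lemma cen: "\<iota> a * x = x * \<iota> a" using alg_props(8)[OF alg] .
lemma cen': "x * (\<iota> a * y) = \<iota> a * (x * y)" using cen by (metis mult.assoc)
lemma cenX: "E * (\<iota> a * y) = \<iota> a * (E * y)" "E * \<iota> a = \<iota> a * E"
  "T j * (\<iota> a * y) = \<iota> a * (T j * y)" "T j * \<iota> a = \<iota> a * T j"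
  "S j * (\<iota> a * y) = \<iota> a * (S j * y)" "S j * \<iota> a = \<iota> a * S j"
  "Ejk r \<iota> q qi S E j k * (\<iota> a * y) = \<iota> a * (Ejk r \<iota> q qi S E j k * y)"
  "Ejk r \<iota> q qi S E j k * \<iota> a = \<iota> a * Ejk r \<iota> q qi S E j k"
  by (rule cen' cen[symmetric])+

lemma cmc[simp]: "cm x (\<iota> a)" "cm (\<iota> a) x" using alg_props(7)[OF alg] cm_sym by blast+

lemma iq: "\<iota> q * \<iota> qi = 1" using qq alg_props[OF alg] by metis
lemma irho: "\<iota> rho * \<iota> rhoi = 1" using rr alg_props[OF alg] by metis
lemma idelta: "\<iota> delta * z = \<iota> rho - \<iota> rhoi" using dd alg_props[OF alg] by metis

lemma valid_iff: "valid_S r s i \<longleftrightarrow> 1 \<le> i \<and> i \<le> r + s - 1 \<and> i \<noteq> r" by (simp add: valid_S_def)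

lemma Squad: "valid_S r s i \<Longrightarrow> S i * S i = z * S i + 1"
proof -
  assume v: "valid_S r s i"
  then have "(S i - \<iota> q) * (S i + \<iota> qi) = 0" using rel unfolding WB_relations_def by blast
  then have "S i * S i + S i * \<iota> qi - \<iota> q * S i - \<iota> q * \<iota> qi = 0" by (simp add: algebra_simps)
  then have "S i * S i + \<iota> qi * S i - \<iota> q * S i - 1 = 0" using iq cen by metis
  then show ?thesis by (simp add: alg_props(6)[OF alg] algebra_simps)
qed

lemma Sbraid: "valid_S r s i \<Longrightarrow> valid_S r s (i+1) \<Longrightarrow> S i * S (i+1) * S i = S (i+1) * S i * S (i+1)"
  using rel unfolding WB_relations_def by blast

lemma Sfar: "valid_S r s i \<Longrightarrow> valid_S r s j \<Longrightarrow> i + 1 < j \<Longrightarrow> cm (S i) (S j)"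
  using rel unfolding WB_relations_def cm_def by blast

lemma EE: "E * E = \<iota> delta * E" using rel unfolding WB_relations_def by blast

lemma ES: "valid_S r s j \<Longrightarrow> j \<noteq> r - 1 \<Longrightarrow> j \<noteq> r + 1 \<Longrightarrow> cm E (S j)"
  using rel unfolding WB_relations_def cm_def by blast

lemma ESE_l: "2 \<le> r \<Longrightarrow> E * S (r-1) * E = \<iota> rho * E"
  using rel unfolding WB_relations_def by metis

lemma ESE_r: "2 \<le> s \<Longrightarrow> E * S (r+1) * E = \<iota> rho * E"
  using rel unfolding WB_relations_def by metis

lemma R1: "2 \<le> r \<Longrightarrow> 2 \<le> s \<Longrightarrow>
   E * T (r-1) * S (r+1) * E * S (r-1) = E * T (r-1) * S (r+1) * E * S (r+1)"
  using rel unfolding WB_relations_def by blast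

lemma R2: "2 \<le> r \<Longrightarrow> 2 \<le> s \<Longrightarrow>
   S (r-1) * E * T (r-1) * S (r+1) * E = S (r+1) * E * T (r-1) * S (r+1) * E"
  using rel unfolding WB_relations_def by blast

lemma cm_ST3: "cm X (S j) \<Longrightarrow> cm X (T j)"
  unfolding T_def by (intro cm_diff) simp_all

lemma cm_ST1: "cm (S i) (S j) \<Longrightarrow> cm (T i) (S j)"
  using cm_ST3[of "S j" i] cm_sym by blast

lemma cm_ST2: "cm (S i) (S j) \<Longrightarrow> cm (T i) (T j)"
  using cm_ST1 cm_ST3 by blast

lemma Tquad: "valid_S r s i \<Longrightarrow> T i * T i = (- z) * T i + 1"
proof -
  assume v: "valid_S r s i"
  have "T i * T i = S i * S i - z * S i - S i * z + z * z" unfolding T_def by (simp add: algebra_simps)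
  also have "\<dots> = - z * (S i - z) + 1" using Squad[OF v] cen[of "q - qi" "S i"] by (simp add: algebra_simps)
  finally show ?thesis unfolding T_def .
qed

lemma Tbraid: "valid_S r s i \<Longrightarrow> valid_S r s (i+1) \<Longrightarrow> T i * T (i+1) * T i = T (i+1) * T i * T (i+1)"
  unfolding T_def by (rule inv_braid[OF cen[symmetric] cen[symmetric] Squad Squad Sbraid])

lemma L_left: "1 \<le> k \<Longrightarrow> k < r \<Longrightarrow> L (Suc k) = T k * L k * T k + T k" by simp
lemma L_1: "L 1 = 0" by simp
lemma L_r1: "L (Suc r) = \<iota> rho * (- (\<Sum>j=1..r. Ej j) + \<iota> delta)" using r1 by simp
lemma L_right: "1 \<le> k \<Longrightarrow> k < s \<Longrightarrow> L (Suc (r + k)) = S (r+k) * L (r+k) * S (r+k) + S (r+k)" by simp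

sublocale left: hecke T "- z" r L
proof
  show "- z * x = x * - z" for x using cen[of "q - qi" x] by simp
  show "T i * T i = - z * T i + 1" if "1 \<le> i" "i < r" for i using Tquad that by (simp add: valid_iff)
  show "T i * T (i+1) * T i = T (i+1) * T i * T (i+1)" if "1 \<le> i" "i+1 < r" for i
    using Tbraid that by (simp add: valid_iff)
  show "cm (T i) (T j)" if "1 \<le> i" "j < r" "i+1 < j" for i j
    using Sfar[of i j] cm_ST2 that by (simp add: valid_iff)
qed (simp_all add: L_left)

lemma Ej_r: "Ej r = E" by (simp add: Ejk_def)

lemma Ej_rec: "1 \<le> j \<Longrightarrow> j < r \<Longrightarrow> Ej j = T j * Ej (Suc j) * T j"
  by (simp add: Ejk_def upt_conv_Cons mult.assoc)

lemma ET: "1 \<le> j \<Longrightarrow> j + 2 \<le> r \<Longrightarrow> cm E (T j)"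
  by (rule cm_ST3, rule ES) (auto simp: valid_iff)

lemma E1: "1 \<le> i \<Longrightarrow> i + 2 \<le> j \<Longrightarrow> j \<le> r \<Longrightarrow> cm (T i) (Ej j)"
proof -
  assume i: "1 \<le> i"
  have "\<forall>j. r - j = d \<longrightarrow> i + 2 \<le> j \<longrightarrow> j \<le> r \<longrightarrow> cm (T i) (Ej j)" for d
  proof (induction d)
    case 0
    show ?case
    proof (intro allI impI)
      fix j assume "r - j = 0" "i + 2 \<le> j" "j \<le> r"
      then have "j = r" by simp
      then show "cm (T i) (Ej j)" using ET[OF i] \<open>i+2 \<le> j\<close> by (simp add: Ej_r cm_sym)
    qed
  next
    case (Suc d)
    show ?case
    proof (intro allI impI)
      fix j assume j: "r - j = Suc d" "i + 2 \<le> j" "j \<le> r"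
      then have "j < r" by simp
      have "cm (T i) (Ej (Suc j))" using Suc j by auto
      moreover have "cm (T i) (T j)" using left.far[of i j] i j \<open>j < r\<close> by simp
      ultimately show "cm (T i) (Ej j)" using Ej_rec[of j] i j \<open>j < r\<close> by (auto intro!: cm_mult)
    qed
  qed
  then show "i + 2 \<le> j \<Longrightarrow> j \<le> r \<Longrightarrow> cm (T i) (Ej j)" by blast
qed

lemma braid_conj:
  fixes a b Y :: "'a::ring_1"
  assumes aY: "a * Y = Y * a" and br: "a * b * a = b * a * b"
  shows "cm b (a * (b * Y * b) * a)"
proof -
  have br': "b * (a * (b * y)) = a * (b * (a * y))" for y using br by (metis mult.assoc)
  have aY': "a * (Y * y) = Y * (a * y)" for y using aY by (metis mult.assoc)
  have "b * (a * (b * Y * b) * a) = b * (a * (b * (Y * (b * a))))" by (simp add: mult.assoc)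
  also have "\<dots> = a * (b * (a * (Y * (b * a))))" by (rule br')
  also have "\<dots> = a * (b * (Y * (a * (b * a))))" by (simp add: aY')
  also have "\<dots> = a * (b * (Y * (b * (a * b))))" using br by (simp add: mult.assoc)
  also have "\<dots> = a * (b * Y * b) * a * b" by (simp add: mult.assoc)
  finally show ?thesis unfolding cm_def by simp
qed

lemma E2: "1 \<le> j \<Longrightarrow> j < i \<Longrightarrow> i < r \<Longrightarrow> cm (T i) (Ej j)"
proof -
  assume j0: "1 \<le> j" and i: "j < i" "i < r"
  have "\<forall>j. i - 1 - j = d \<longrightarrow> 1 \<le> j \<longrightarrow> j < i \<longrightarrow> cm (T i) (Ej j)" for d
  proof (induction d)
    case 0
    show ?case
    proof (intro allI impI)
      fix j assume j: "i - 1 - j = 0" "1 \<le> j" "j < i"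
      then have ji: "i = Suc j" by simp
      have e1: "Ej j = T j * Ej i * T j" using Ej_rec[of j] j i ji by simp
      have e2: "Ej i = T i * Ej (Suc i) * T i" using Ej_rec[of i] j i by simp
      have "cm (T j) (Ej (Suc i))" using E1[of j "Suc i"] j i ji by simp
      moreover have "T j * T i * T j = T i * T j * T i" using left.braid[of j] ji j i by simp
      ultimately show "cm (T i) (Ej j)" unfolding e1 e2 using braid_conj[of "T j" "Ej (Suc i)" "T i"]
        by (simp add: cm_def)
    qed
  next
    case (Suc d)
    show ?case
    proof (intro allI impI)
      fix j assume j: "i - 1 - j = Suc d" "1 \<le> j" "j < i"
      have "cm (T i) (Ej (Suc j))" using Suc j by auto
      moreover have "cm (T i) (T j)" using left.far[of j i] j i by (simp add: cm_sym)
      ultimately show "cm (T i) (Ej j)" using Ej_rec[of j] j i by (auto intro!: cm_mult)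
    qed
  qed
  then show ?thesis using j0 i by blast
qed

lemma E3: "1 \<le> i \<Longrightarrow> i < r \<Longrightarrow> cm (T i) (Ej i + Ej (Suc i))"
proof -
  assume i: "1 \<le> i" "i < r"
  have "cm (T i) (Ej (Suc i) + T i * Ej (Suc i) * T i)"
    by (rule conj_pair[where w="-z"]) (use cen left.quad i in auto)
  then show ?thesis using Ej_rec[OF i] by (simp add: add.commute)
qed

lemma TF: "1 \<le> i \<Longrightarrow> i < r \<Longrightarrow> cm (T i) (\<Sum>j=1..r. Ej j)"
proof -
  assume i: "1 \<le> i" "i < r"
  have sub: "{i, Suc i} \<subseteq> {1..r}" using i by auto
  have "(\<Sum>j=1..r. Ej j) = (\<Sum>j\<in>{1..r} - {i, Suc i}. Ej j) + (\<Sum>j\<in>{i, Suc i}. Ej j)"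
    by (rule sum.subset_diff[OF sub]) simp
  also have "(\<Sum>j\<in>{i, Suc i}. Ej j) = Ej i + Ej (Suc i)" by simp
  finally have e: "(\<Sum>j=1..r. Ej j) = (\<Sum>j\<in>{1..r} - {i, Suc i}. Ej j) + (Ej i + Ej (Suc i))" .
  have "cm (T i) (\<Sum>j\<in>{1..r} - {i, Suc i}. Ej j)"
  proof (rule cm_sum)
    fix j assume "j \<in> {1..r} - {i, Suc i}"
    then have j: "1 \<le> j" "j \<le> r" "j \<noteq> i" "j \<noteq> Suc i" by auto
    show "cm (T i) (Ej j)"
    proof (cases "j < i")
      case True then show ?thesis using E2 j i by simp
    next
      case False then show ?thesis using E1 j i by simp
    qed
  qed
  then show ?thesis unfolding e using E3[OF i] by (rule cm_add)
qed

lemma TL: "1 \<le> i \<Longrightarrow> i < r \<Longrightarrow> cm (T i) (L (Suc r))"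
proof -
  assume "1 \<le> i" "i < r"
  then have "cm (T i) (\<Sum>j=1..r. Ej j)" by (rule TF)
  then show ?thesis unfolding L_r1 by (intro cm_mult cm_add cm_uminus cmc)
qed

lemma W_shift: "1 \<le> k \<Longrightarrow> k < r \<Longrightarrow> d + 2 \<le> k \<Longrightarrow> T k * Wp T d k * T k = Wp T (Suc d) (Suc k)"
proof (induction d)
  case 0
  have "T (k-1) * T (Suc (k-1)) * T (k-1) = T (Suc (k-1)) * T (k-1) * T (Suc (k-1))"
    using left.braid[of "k-1"] 0 by simp
  then show ?case using 0 by simp
next
  case (Suc d)
  have c: "cm (T k) (T (k - 2 - d))" using left.far[of "k-2-d" k] Suc.prems by (simp add: cm_sym)
  have c1: "T k * T (k-2-d) = T (k-2-d) * T k" using c unfolding cm_def .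
  have "T k * Wp T (Suc d) k * T k = (T k * T (k-2-d)) * Wp T d k * (T (k-2-d) * T k)"
    by (simp add: mult.assoc)
  also have "\<dots> = (T (k-2-d) * T k) * Wp T d k * (T k * T (k-2-d))" by (simp only: c1)
  also have "\<dots> = T (k-2-d) * (T k * Wp T d k * T k) * T (k-2-d)" by (simp only: mult.assoc)
  also have "\<dots> = T (k-2-d) * Wp T (Suc d) (Suc k) * T (k-2-d)" using Suc by simp
  also have "\<dots> = Wp T (Suc (Suc d)) (Suc k)" by (simp add: Suc_diff_Suc numeral_2_eq_2)
  finally show ?case .
qed

lemma L_closed: "1 \<le> k \<Longrightarrow> k \<le> r \<Longrightarrow> L k = (\<Sum>d<k-1. Wp T d k)"
proof (induction k)
  case 0 then show ?case by simp
next
  case (Suc k)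
  show ?case
  proof (cases "k = 0")
    case True then show ?thesis by simp
  next
    case False
    then have k: "1 \<le> k" "k < r" using Suc.prems by auto
    have "L (Suc k) = T k * L k * T k + T k" using L_left k by blast
    also have "\<dots> = (\<Sum>d<k-1. T k * Wp T d k * T k) + T k"
      using Suc k by (simp add: sum_distrib_left sum_distrib_right)
    also have "\<dots> = (\<Sum>d<k-1. Wp T (Suc d) (Suc k)) + Wp T 0 (Suc k)"
      using W_shift k by simp
    also have "\<dots> = (\<Sum>d<Suc (k-1). Wp T d (Suc k))"
      by (simp only: sum.lessThan_Suc_shift add.commute)
    finally show ?thesis using k by simp
  qed
qed

lemma ETE: "2 \<le> r \<Longrightarrow> E * T (r-1) * E = \<iota> rhoi * E"
proof -
  assume r: "2 \<le> r"
  have "E * T (r-1) * E = E * S (r-1) * E - z * (E * E)"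
    unfolding T_def by (simp add: algebra_simps cenX)
  also have "\<dots> = \<iota> rho * E - \<iota> delta * z * E" using ESE_l[OF r] EE cen[of delta z]
    by (simp add: mult.assoc)
  also have "\<dots> = \<iota> rhoi * E" unfolding idelta by (simp add: algebra_simps)
  finally show ?thesis .
qed

lemma E_W: "2 \<le> r \<Longrightarrow> d + 2 \<le> r \<Longrightarrow>
   E * Wp T d r = \<iota> rho * (E * Ej (r - 1 - d)) \<and> Wp T d r * E = \<iota> rho * (Ej (r - 1 - d) * E)"
proof (induction d)
  case 0
  have e: "Ej (r-1) = T (r-1) * E * T (r-1)" using Ej_rec[of "r-1"] Ej_r 0 by simp
  have "E * Ej (r-1) = \<iota> rhoi * (E * T (r-1))" unfolding e using ETE[OF 0(1)]
    by (simp add: mult.assoc[symmetric])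
  moreover have "Ej (r-1) * E = \<iota> rhoi * (T (r-1) * E)" unfolding e using ETE[OF 0(1)]
    by (simp add: mult.assoc cenX)
  ultimately show ?case using irho by (simp add: mult.assoc[symmetric])
next
  case (Suc d)
  define j where "j = r - 2 - d"
  have j: "1 \<le> j" "j < r" "j + 2 \<le> r" "Suc j = r - 1 - d" "r - 1 - Suc d = j" using Suc.prems j_def by auto
  have ej: "Ej j = T j * Ej (r - 1 - d) * T j" using Ej_rec[OF j(1,2)] j(4) by simp
  have w: "Wp T (Suc d) r = T j * Wp T d r * T j" by (simp add: j_def)
  have c: "E * T j = T j * E" using ET[OF j(1,3)] unfolding cm_def .
  have c': "E * (T j * y) = T j * (E * y)" for y using c by (metis mult.assoc)
  have IH: "E * Wp T d r = \<iota> rho * (E * Ej (r - 1 - d))" "Wp T d r * E = \<iota> rho * (Ej (r - 1 - d) * E)"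
    using Suc by auto
  have "E * Wp T (Suc d) r = T j * (E * Wp T d r) * T j" unfolding w by (simp add: mult.assoc c')
  also have "\<dots> = \<iota> rho * (E * Ej j)" unfolding IH ej by (simp add: mult.assoc c' cenX)
  finally have 1: "E * Wp T (Suc d) r = \<iota> rho * (E * Ej (r - 1 - Suc d))" using j by simp
  have "Wp T (Suc d) r * E = T j * (Wp T d r * E) * T j" unfolding w by (simp add: mult.assoc c)
  also have "\<dots> = \<iota> rho * (Ej j * E)" unfolding IH ej by (simp add: mult.assoc c cenX)
  finally have 2: "Wp T (Suc d) r * E = \<iota> rho * (Ej (r - 1 - Suc d) * E)" using j by simp
  show ?case using 1 2 by simp
qed

definition "G = (\<Sum>j\<in>{1..<r}. Ej j)"

lemma F_split: "(\<Sum>j=1..r. Ej j) = G + E"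
proof -
  have "{1..r} = insert r {1..<r}" using r1 by auto
  then show ?thesis unfolding G_def using Ej_r by (simp add: add.commute)
qed

lemma reidx: "(\<Sum>d<r-1. f (r - 1 - d)) = (\<Sum>j\<in>{1..<r}. f j)"
  by (rule sum.reindex_bij_witness[where i="\<lambda>j. r - 1 - j" and j="\<lambda>d. r - 1 - d"]) auto

lemma EL_r: "E * L r = \<iota> rho * (\<Sum>j\<in>{1..<r}. E * Ej j) \<and> L r * E = \<iota> rho * (\<Sum>j\<in>{1..<r}. Ej j * E)"
proof -
  have Lr: "L r = (\<Sum>d<r-1. Wp T d r)" using L_closed r1 by simp
  have "E * L r = (\<Sum>d<r-1. \<iota> rho * (E * Ej (r - 1 - d)))"
    unfolding Lr sum_distrib_left by (rule sum.cong) (use E_W in auto)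
  moreover have "L r * E = (\<Sum>d<r-1. \<iota> rho * (Ej (r - 1 - d) * E))"
    unfolding Lr sum_distrib_right by (rule sum.cong) (use E_W in auto)
  moreover have "(\<Sum>d<r-1. \<iota> rho * (E * Ej (r - 1 - d))) = \<iota> rho * (\<Sum>j\<in>{1..<r}. E * Ej j)"
    unfolding sum_distrib_left by (rule reidx[where f="\<lambda>j. \<iota> rho * (E * Ej j)"])
  moreover have "(\<Sum>d<r-1. \<iota> rho * (Ej (r - 1 - d) * E)) = \<iota> rho * (\<Sum>j\<in>{1..<r}. Ej j * E)"
    unfolding sum_distrib_left by (rule reidx[where f="\<lambda>j. \<iota> rho * (Ej j * E)"])
  ultimately show ?thesis by simp
qed

lemma ann: "E * (L r + L (Suc r)) = 0" "(L r + L (Suc r)) * E = 0"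
proof -
  have "E * L (Suc r) = \<iota> rho * (- (E * G) - E * E + \<iota> delta * E)"
    unfolding L_r1 F_split by (simp add: algebra_simps cenX)
  also have "\<dots> = - (\<iota> rho * (\<Sum>j\<in>{1..<r}. E * Ej j))"
    unfolding EE G_def sum_distrib_left by (simp add: algebra_simps sum_distrib_left)
  finally show "E * (L r + L (Suc r)) = 0" using EL_r by (simp add: distrib_left)
  have "L (Suc r) * E = \<iota> rho * (- (G * E) - E * E + \<iota> delta * E)"
    unfolding L_r1 F_split by (simp add: algebra_simps cenX)
  also have "\<dots> = - (\<iota> rho * (\<Sum>j\<in>{1..<r}. Ej j * E))"
    unfolding EE G_def sum_distrib_right by (simp add: algebra_simps sum_distrib_left)
  finally show "(L r + L (Suc r)) * E = 0" using EL_r by (simp add: distrib_right)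
qed

end



context wb begin

lemma cenG: "x * \<iota> a = \<iota> a * x" by (rule cen[symmetric])

lemma R1': "2 \<le> r \<Longrightarrow> 2 \<le> s \<Longrightarrow>
   E * T (r-1) * S (Suc r) * E * S (r-1) = E * T (r-1) * S (Suc r) * E * S (Suc r)"
  using R1 by (simp only: Suc_eq_plus1)

lemma R2': "2 \<le> r \<Longrightarrow> 2 \<le> s \<Longrightarrow>
   S (r-1) * E * T (r-1) * S (Suc r) * E = S (Suc r) * E * T (r-1) * S (Suc r) * E"
  using R2 by (simp only: Suc_eq_plus1)

lemma ESE_r': "2 \<le> s \<Longrightarrow> E * S (Suc r) * E = \<iota> rho * E"
  using ESE_r by (simp only: Suc_eq_plus1)

lemma Tu: "1 \<le> j \<Longrightarrow> j < r \<Longrightarrow> 2 \<le> s \<Longrightarrow> cm (T j) (S (Suc r))"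
  by (rule cm_ST1, rule Sfar) (auto simp: valid_iff)

lemma uquad: "2 \<le> s \<Longrightarrow> S (Suc r) * S (Suc r) = z * S (Suc r) + 1"
  by (rule Squad) (auto simp: valid_iff)

lemma K0:
  assumes r: "2 \<le> r" and s: "2 \<le> s"
  shows "E * S (Suc r) * Ej (r-1) * S (Suc r) = S (Suc r) * Ej (r-1) * S (Suc r) * E"
proof -
  define t where "t = T (r-1)"
  define u where "u = S (Suc r)"
  define K where "K = E * t * u * E"
  have tu: "t * u = u * t" using Tu[of "r-1"] r s unfolding t_def u_def cm_def by simp
  have uu: "u * u = z * u + 1" using uquad[OF s] unfolding u_def .
  have ej: "Ej (r-1) = t * E * t" unfolding t_def using Ej_rec[of "r-1"] Ej_r r by simp
  have Sr: "S (r-1) = t + z" unfolding t_def T_def by simp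
  have r1': "K * (t + z) = K * u" using R1'[OF r s] unfolding K_def u_def t_def Sr[unfolded t_def] .
  have r2': "(t + z) * K = u * K" using R2'[OF r s] unfolding K_def u_def t_def Sr[unfolded t_def]
    by (simp only: mult.assoc)
  have Kz: "K * z = z * K" by (rule cenG)
  have Kz': "K * (z * y) = z * (K * y)" for y by (rule cen')
  have uz: "u * (z * y) = z * (u * y)" for y by (rule cen')
  have Kt: "K * t = K * u - z * K" using r1' Kz by (simp add: algebra_simps)
  have tK: "t * K = u * K - z * K" using r2' by (simp add: algebra_simps)
  have "E * u * Ej (r-1) * u = K * t * u" unfolding ej K_def by (simp add: mult.assoc tu)
  also have "\<dots> = K * (u * u) - z * (K * u)" unfolding Kt by (simp add: algebra_simps)
  also have "\<dots> = K" unfolding uu by (simp add: algebra_simps cenX Kz')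
  finally have 1: "E * u * Ej (r-1) * u = K" .
  have "u * Ej (r-1) * u * E = u * (t * K)" unfolding ej K_def by (simp add: mult.assoc tu)
  also have "\<dots> = (u * u) * K - z * (u * K)" unfolding tK by (simp add: algebra_simps cenX uz)
  also have "\<dots> = K" unfolding uu by (simp add: algebra_simps)
  finally have 2: "u * Ej (r-1) * u * E = K" .
  show ?thesis using 1 2 unfolding u_def by simp
qed

lemma Ksum:
  assumes j: "1 \<le> j" "j < r" and s: "2 \<le> s"
  shows "E * S (Suc r) * Ej j * S (Suc r) = S (Suc r) * Ej j * S (Suc r) * E"
proof -
  have "\<forall>j. r - 1 - j = d \<longrightarrow> 1 \<le> j \<longrightarrow> j < r \<longrightarrow>
     E * S (Suc r) * Ej j * S (Suc r) = S (Suc r) * Ej j * S (Suc r) * E" for d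
  proof (induction d)
    case 0
    show ?case
    proof (intro allI impI)
      fix j assume "r - 1 - j = 0" "1 \<le> j" "j < r"
      then have "j = r - 1" "2 \<le> r" by auto
      then show "E * S (Suc r) * Ej j * S (Suc r) = S (Suc r) * Ej j * S (Suc r) * E"
        using K0 s by simp
    qed
  next
    case (Suc d)
    show ?case
    proof (intro allI impI)
      fix j assume jj: "r - 1 - j = Suc d" "1 \<le> j" "j < r"
      define u where "u = S (Suc r)"
      have IH: "E * u * Ej (Suc j) * u = u * Ej (Suc j) * u * E" using Suc jj unfolding u_def by auto
      have ej: "Ej j = T j * Ej (Suc j) * T j" using Ej_rec jj by simp
      have tu: "T j * u = u * T j" using Tu[of j] jj s unfolding u_def cm_def by simp
      have tE: "T j * E = E * T j" using ET[of j] jj unfolding cm_def by simp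
      have tu': "T j * (u * y) = u * (T j * y)" for y using tu by (metis mult.assoc)
      have tE': "T j * (E * y) = E * (T j * y)" for y using tE by (metis mult.assoc)
      have "E * u * Ej j * u = T j * (E * u * Ej (Suc j) * u) * T j"
        unfolding ej by (simp add: mult.assoc tu' tE' tu tE)
      also have "\<dots> = T j * (u * Ej (Suc j) * u * E) * T j" by (simp only: IH)
      also have "\<dots> = u * Ej j * u * E" unfolding ej by (simp add: mult.assoc tu' tE' tu tE)
      finally show "E * S (Suc r) * Ej j * S (Suc r) = S (Suc r) * Ej j * S (Suc r) * E"
        unfolding u_def .
    qed
  qed
  then show ?thesis using j by blast
qed

lemma EX:
  assumes s: "2 \<le> s"
  shows "cm E (S (Suc r) * (\<iota> rho * (\<iota> delta - E)) * S (Suc r) + S (Suc r))"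
proof -
  let ?u = "S (Suc r)" and ?a = "\<iota> rho" and ?d = "\<iota> delta"
  have uu: "?u * ?u = z * ?u + 1" using uquad[OF s] .
  have EuE: "E * ?u * E = ?a * E" using ESE_r'[OF s] .
  have EuE': "E * (?u * (E * y)) = ?a * (E * y)" for y using EuE by (metis mult.assoc)
  have adz: "?a * (?d * z) = ?a * ?a - 1" unfolding idelta using irho
    by (simp add: algebra_simps)
  have adz': "?a * (?d * (z * y)) = ?a * (?a * y) - y" for y
    using arg_cong[OF adz, of "\<lambda>w. w * y"] by (simp add: algebra_simps)
  have X: "?u * (?a * (?d - E)) * ?u + ?u = ?a * (?d * (?u * ?u)) - ?a * (?u * (E * ?u)) + ?u"
    by (simp add: algebra_simps cenX)
  have "E * (?a * (?d * (?u * ?u)) - ?a * (?u * (E * ?u)) + ?u)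
      = ?a * (?d * (z * (E * ?u))) + ?a * (?d * E) - ?a * (?a * (E * ?u)) + E * ?u"
    unfolding uu by (simp add: algebra_simps cenX EuE')
  also have "\<dots> = ?a * (?d * E)" unfolding adz' by (simp add: algebra_simps)
  finally have 1: "E * (?a * (?d * (?u * ?u)) - ?a * (?u * (E * ?u)) + ?u) = ?a * (?d * E)" .
  have EuE'': "?u * (E * (?u * E)) = ?a * (?u * E)" using EuE by (simp add: mult.assoc cenX)
  have "(?a * (?d * (?u * ?u)) - ?a * (?u * (E * ?u)) + ?u) * E
      = ?a * (?d * (z * (?u * E))) + ?a * (?d * E) - ?a * (?a * (?u * E)) + ?u * E"
    unfolding uu by (simp add: algebra_simps cenX EuE'')
  also have "\<dots> = ?a * (?d * E)" unfolding adz' by (simp add: algebra_simps)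
  finally have 2: "(?a * (?d * (?u * ?u)) - ?a * (?u * (E * ?u)) + ?u) * E = ?a * (?d * E)" .
  show ?thesis unfolding cm_def X 1 2 ..
qed

lemma gen_Ej:
  assumes XE: "cm X E" and XT: "\<And>i. 1 \<le> i \<Longrightarrow> i < r \<Longrightarrow> cm X (T i)"
  shows "1 \<le> j \<Longrightarrow> j \<le> r \<Longrightarrow> cm X (Ej j)"
proof -
  have "\<forall>j. r - j = d \<longrightarrow> 1 \<le> j \<longrightarrow> j \<le> r \<longrightarrow> cm X (Ej j)" for d
  proof (induction d)
    case 0 then show ?case using XE Ej_r by (auto simp: le_antisym)
  next
    case (Suc d)
    show ?case
    proof (intro allI impI)
      fix j assume j: "r - j = Suc d" "1 \<le> j" "j \<le> r"
      then have "cm X (Ej (Suc j))" using Suc by auto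
      moreover have "cm X (T j)" using XT j by simp
      ultimately show "cm X (Ej j)" using Ej_rec[of j] j by (auto intro!: cm_mult)
    qed
  qed
  then show "1 \<le> j \<Longrightarrow> j \<le> r \<Longrightarrow> cm X (Ej j)" by blast
qed

lemma gen_L1:
  assumes XE: "cm X E" and XT: "\<And>i. 1 \<le> i \<Longrightarrow> i < r \<Longrightarrow> cm X (T i)"
  shows "cm X (L (Suc r))"
proof -
  have "cm X (\<Sum>j=1..r. Ej j)" by (rule cm_sum) (use gen_Ej[OF XE XT] in auto)
  then show ?thesis unfolding L_r1 by (intro cm_mult cm_add cm_uminus cmc)
qed

lemma EL2:
  assumes s: "2 \<le> s"
  shows "cm E (L (Suc (Suc r)))"
proof -
  let ?u = "S (Suc r)"
  have rr: "L (Suc (Suc r)) = ?u * L (Suc r) * ?u + ?u" using L_right[of 1] s by simp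
  have L1: "L (Suc r) = \<iota> rho * (\<iota> delta - E) - \<iota> rho * G" unfolding L_r1 F_split
    by (simp add: algebra_simps)
  have e: "L (Suc (Suc r)) = (?u * (\<iota> rho * (\<iota> delta - E)) * ?u + ?u) - \<iota> rho * (?u * G * ?u)"
    unfolding rr L1 by (simp add: algebra_simps cenX)
  have "E * (?u * G * ?u) = (?u * G * ?u) * E"
  proof -
    have "E * (?u * G * ?u) = (\<Sum>j\<in>{1..<r}. E * ?u * Ej j * ?u)"
      unfolding G_def by (simp add: sum_distrib_left sum_distrib_right mult.assoc)
    also have "\<dots> = (\<Sum>j\<in>{1..<r}. ?u * Ej j * ?u * E)"
      by (rule sum.cong[OF refl]) (use Ksum s in auto)
    also have "\<dots> = (?u * G * ?u) * E"
      unfolding G_def by (simp add: sum_distrib_left sum_distrib_right mult.assoc)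
    finally show ?thesis .
  qed
  then have "cm E (?u * G * ?u)" unfolding cm_def .
  then show ?thesis unfolding e by (rule cm_diff[OF EX[OF s] cm_mult[OF cmc(1)]])
qed

lemma EL_high: "Suc (Suc r) \<le> k \<Longrightarrow> k \<le> r + s \<Longrightarrow> cm E (L k)"
proof (induction k)
  case 0 then show ?case by simp
next
  case (Suc k)
  show ?case
  proof (cases "Suc k = Suc (Suc r)")
    case True then show ?thesis using EL2 Suc.prems by simp
  next
    case False
    then have k: "Suc (Suc r) \<le> k" "k < r + s" using Suc.prems by auto
    have rr: "L (Suc k) = S k * L k * S k + S k" using L_right[of "k - r"] k by simp
    have "cm E (S k)" by (rule ES) (use k in \<open>auto simp: valid_iff\<close>)
    then show ?thesis unfolding rr using Suc.IH k by (auto intro!: cm_add cm_mult)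
  qed
qed

lemma EL_low: "1 \<le> k \<Longrightarrow> k < r \<Longrightarrow> cm E (L k)"
  by (rule left.G) (auto intro!: ET)

lemma L2_comm: "2 \<le> s \<Longrightarrow> cm (L (Suc r)) (L (Suc (Suc r)))"
proof -
  assume s: "2 \<le> s"
  have rr: "L (Suc (Suc r)) = S (Suc r) * L (Suc r) * S (Suc r) + S (Suc r)" using L_right[of 1] s by simp
  have "cm (L (Suc (Suc r))) (L (Suc r))"
  proof (rule gen_L1)
    show "cm (L (Suc (Suc r))) E" using EL2[OF s] cm_sym by blast
    show "cm (L (Suc (Suc r))) (T i)" if "1 \<le> i" "i < r" for i
    proof -
      have "cm (T i) (L (Suc (Suc r)))" unfolding rr using Tu[OF that s] TL[OF that]
        by (intro cm_add cm_mult)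
      then show ?thesis by (rule cm_sym)
    qed
  qed
  then show ?thesis by (rule cm_sym)
qed

lemma Bc_right: "2 \<le> j \<Longrightarrow> j < s \<Longrightarrow> cm (L (Suc r)) (S (r + j))"
proof -
  assume j: "2 \<le> j" "j < s"
  have "cm (S (r + j)) (L (Suc r))"
  proof (rule gen_L1)
    have "cm E (S (r + j))" by (rule ES) (use j in \<open>auto simp: valid_iff\<close>)
    then show "cm (S (r + j)) E" by (rule cm_sym)
    show "cm (S (r + j)) (T i)" if "1 \<le> i" "i < r" for i
    proof -
      have "cm (T i) (S (r + j))" by (rule cm_ST1, rule Sfar) (use that j in \<open>auto simp: valid_iff\<close>)
      then show ?thesis by (rule cm_sym)
    qed
  qed
  then show ?thesis by (rule cm_sym)
qed

sublocale right: hecke "\<lambda>i. S (r+i)" z s "\<lambda>i. L (r+i)"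
proof
  show "z * x = x * z" for x by (rule cen)
  show "S (r+i) * S (r+i) = z * S (r+i) + 1" if "1 \<le> i" "i < s" for i
    by (rule Squad) (use that in \<open>auto simp: valid_iff\<close>)
  show "S (r+i) * S (r+(i+1)) * S (r+i) = S (r+(i+1)) * S (r+i) * S (r+(i+1))" if "1 \<le> i" "i+1 < s" for i
    using Sbraid[of "r+i"] that by (auto simp: valid_iff)
  show "cm (S (r+i)) (S (r+j))" if "1 \<le> i" "j < s" "i+1 < j" for i j
    by (rule Sfar) (use that in \<open>auto simp: valid_iff\<close>)
  show "cm (L (r+1)) (S (r+j))" if "2 \<le> j" "j < s" for j using Bc_right that by simp
  show "cm (L (r+1)) (L (r+2))" if "2 \<le> s" using L2_comm that by (simp add: numeral_2_eq_2)
  show "L (r + Suc k) = S (r+k) * L (r+k) * S (r+k) + S (r+k)" if "1 \<le> k" "k < s" for k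
    using L_right that by simp
qed

end



declare JM.simps[simp del]

context wb begin

lemma L1_low: "1 \<le> k \<Longrightarrow> k \<le> r \<Longrightarrow> cm (L (Suc r)) (L k)"
proof (rule left.G)
  show "cm (L (Suc r)) (T j)" if "1 \<le> j" "j < k" "k \<le> r" for j
    using TL[of j] that cm_sym by auto
qed (simp_all add: JM.simps)

lemma S_low: "r + 1 \<le> j \<Longrightarrow> j < r + s \<Longrightarrow> 1 \<le> k \<Longrightarrow> k \<le> r \<Longrightarrow> cm (S j) (L k)"
proof (rule left.G)
  show "cm (S j) (T i)" if "1 \<le> i" "i < k" "r + 1 \<le> j" "j < r + s" "k \<le> r" for i
  proof -
    have "cm (T i) (S j)" by (rule cm_ST1, rule Sfar) (use that in \<open>auto simp: valid_iff\<close>)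
    then show ?thesis by (rule cm_sym)
  qed
qed (simp_all add: JM.simps)

lemma cross: "1 \<le> k \<Longrightarrow> k \<le> r \<Longrightarrow> r + 1 \<le> l \<Longrightarrow> l \<le> r + s \<Longrightarrow> cm (L k) (L l)"
proof -
  assume k: "1 \<le> k" "k \<le> r" and l: "r + 1 \<le> l" "l \<le> r + s"
  have "cm (L k) (L (r + (l - r)))"
  proof (rule right.G)
    show "cm (L k) (L (r + 1))" using L1_low[OF k] cm_sym by simp
    show "cm (L k) (S (r + j))" if "1 \<le> j" "j < l - r" for j
    proof -
      have "cm (S (r + j)) (L k)" using S_low[of "r+j" k] that k l by auto
      then show ?thesis by (rule cm_sym)
    qed
  qed (use l in auto)
  then show ?thesis using l by simp
qed

lemma all_comm: "1 \<le> i \<Longrightarrow> i \<le> r + s \<Longrightarrow> 1 \<le> j \<Longrightarrow> j \<le> r + s \<Longrightarrow> cm (L i) (L j)"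
proof -
  assume i: "1 \<le> i" "i \<le> r + s" and j: "1 \<le> j" "j \<le> r + s"
  have rr: "cm (L (r + a)) (L (r + b))" if "1 \<le> a" "a \<le> s" "1 \<le> b" "b \<le> s" for a b
    using right.Lcomm that by simp
  show ?thesis
  proof (cases "i \<le> r")
    case True
    show ?thesis
    proof (cases "j \<le> r")
      case True then show ?thesis using left.Lcomm \<open>i \<le> r\<close> i j by simp
    next
      case False then show ?thesis using cross[of i j] \<open>i \<le> r\<close> i j by simp
    qed
  next
    case False
    show ?thesis
    proof (cases "j \<le> r")
      case True then show ?thesis using cross[of j i] False i j cm_sym by auto
    next
      case False
      then show ?thesis using rr[of "i - r" "j - r"] \<open>\<not> i \<le> r\<close> i j by simp
    qed
  qed
qed

context
  fixes c :: "(nat \<Rightarrow> nat) \<Rightarrow> 'r" assumes c: "in_Srs r s c"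
begin

abbreviation "pe \<equiv> poly_eval (r+s) \<iota> c L"

lemma finc: "finite {m. c m \<noteq> 0}" using c unfolding in_Srs_def is_poly_def by blast

lemma cm_T_left: "1 \<le> i \<Longrightarrow> i < r \<Longrightarrow> cm (T i) pe"
proof -
  assume i: "1 \<le> i" "i < r"
  show ?thesis
  proof (rule sym_poly_comm[OF alg finc])
    have "transpose i (i+1) permutes {1..r}" by (rule permutes_swap_id) (use i in auto)
    then show "c (m \<circ> transpose i (i+1)) = c m" for m using c unfolding in_Srs_def by blast
    show "1 \<le> i" "i + 1 \<le> r + s" using i by auto
    show "cm (T i) (L k)" if "1 \<le> k" "k \<le> r + s" "k \<noteq> i" "k \<noteq> i + 1" for k
    proof (cases "k \<le> r")
      case True then show ?thesis using left.Tcomm[of i k] that i by simp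
    next
      case False
      have "cm (T i) (L (r + (k - r)))"
      proof (rule right.G)
        show "cm (T i) (L (r + 1))" using TL i by simp
        show "cm (T i) (S (r + j))" if "1 \<le> j" "j < k - r" for j
          by (rule cm_ST1, rule Sfar) (use that i \<open>k \<le> r + s\<close> in \<open>auto simp: valid_iff\<close>)
      qed (use False that in auto)
      then show ?thesis using False by simp
    qed
    show "cm (L i) (L (i + 1))" using left.Lcomm i by simp
    show "cm (T i) (L i + L (i + 1))" using left.pair(1) i by simp
    show "cm (T i) (L i * L (i + 1))" using left.pair(2) i by simp
  qed
qed

lemma cm_S_left: "1 \<le> i \<Longrightarrow> i < r \<Longrightarrow> cm pe (S i)"
proof -
  assume i: "1 \<le> i" "i < r"
  have "cm pe (T i + z)" using cm_T_left[OF i] cm_sym by (intro cm_add) auto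
  then show ?thesis unfolding T_def by simp
qed

lemma cm_S_right: "1 \<le> t \<Longrightarrow> t < s \<Longrightarrow> cm pe (S (r + t))"
proof -
  assume t: "1 \<le> t" "t < s"
  have "cm (S (r + t)) pe"
  proof (rule sym_poly_comm[OF alg finc])
    have "transpose (r+t) (r+t+1) permutes {r+1..r+s}" by (rule permutes_swap_id) (use t in auto)
    then show "c (m \<circ> transpose (r+t) (r+t+1)) = c m" for m using c unfolding in_Srs_def by blast
    show "1 \<le> r + t" "r + t + 1 \<le> r + s" using t by auto
    show "cm (S (r + t)) (L k)" if "1 \<le> k" "k \<le> r + s" "k \<noteq> r + t" "k \<noteq> r + t + 1" for k
    proof (cases "k \<le> r")
      case True then show ?thesis using S_low[of "r+t" k] that t by simp
    next
      case False
      then have "cm (S (r + t)) (L (r + (k - r)))" using right.Tcomm[of t "k - r"] that t by simp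
      then show ?thesis using False by simp
    qed
    show "cm (L (r + t)) (L (r + t + 1))" using right.Lcomm[of t "t+1"] t by simp
    show "cm (S (r + t)) (L (r + t) + L (r + t + 1))" using right.pair(1)[of t] t by simp
    show "cm (S (r + t)) (L (r + t) * L (r + t + 1))" using right.pair(2)[of t] t by simp
  qed
  then show ?thesis by (rule cm_sym)
qed

lemma cm_E_pe: "cm pe E"
proof -
  have "cm E pe"
  proof (rule E_poly_comm[OF alg finc])
    show "\<forall>m k. m r = 0 \<and> m (r+1) = 0 \<and> 0 < k \<longrightarrow>
          (\<Sum>a\<le>k. (-1)^(k-a) * c (m(r := a, r+1 := k-a))) = 0" using c unfolding in_Srs_def by blast
    show "1 \<le> r" "r + 1 \<le> r + s" using r1 s1 by auto
    show "cm E (L k)" if "1 \<le> k" "k \<le> r + s" "k \<noteq> r" "k \<noteq> r + 1" for k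
    proof (cases "k < r")
      case True then show ?thesis using EL_low that by simp
    next
      case False then show ?thesis using EL_high that by simp
    qed
    show "cm (L r) (L (r + 1))" using cross[of r "r+1"] r1 s1 by simp
    show "E * (L r + L (r + 1)) = 0" using ann(1) by simp
    show "(L r + L (r + 1)) * E = 0" using ann(2) by simp
  qed
  then show ?thesis by (rule cm_sym)
qed

lemma central: "x \<in> gen_alg r s \<iota> S E \<Longrightarrow> x * pe = pe * x"
proof (induction rule: gen_alg.induct)
  case (scal c)
  then show ?case using cmc unfolding cm_def by metis
next
  case (genS i)
  show ?case
  proof (cases "i < r")
    case True then show ?thesis using cm_S_left[of i] genS unfolding cm_def valid_iff by auto
  next
    case False
    then have "cm pe (S (r + (i - r)))" using cm_S_right[of "i - r"] genS unfolding valid_iff by auto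
    then show ?thesis using False unfolding cm_def by simp
  qed
next
  case genE then show ?case using cm_E_pe unfolding cm_def by simp
next
  case (add x y) then show ?case by (simp add: algebra_simps)
next
  case (mult x y)
  then show ?case using cm_mult[of pe x y] unfolding cm_def by simp
qed

end

end

theorem mainTheorem19:
  fixes r s :: nat and q qi rho rhoi delta :: "'r::idom"
    and \<iota> :: "'r \<Rightarrow> 'a::ring_1" and S :: "nat \<Rightarrow> 'a" and E :: 'a
  assumes "1 \<le> r" and "1 \<le> s"
    and "q * qi = 1" and "rho * rhoi = 1" and "q \<noteq> qi"
    and "delta * (q - qi) = rho - rhoi"
    and "is_alg_map \<iota>"
    and "WB_relations r s \<iota> q qi rho delta S E"
  shows "(\<forall>i\<in>{1..r+s}. \<forall>j\<in>{1..r+s}.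
            JM r \<iota> q qi rho delta S E i * JM r \<iota> q qi rho delta S E j
          = JM r \<iota> q qi rho delta S E j * JM r \<iota> q qi rho delta S E i)
    \<and> (\<forall>c. in_Srs r s c \<longrightarrow>
         (\<forall>z\<in>gen_alg r s \<iota> S E.
            z * poly_eval (r+s) \<iota> c (JM r \<iota> q qi rho delta S E)
          = poly_eval (r+s) \<iota> c (JM r \<iota> q qi rho delta S E) * z))"
proof -
  interpret W: wb r s q qi rho rhoi delta \<iota> S E
    by (unfold_locales) (rule assms)+
  show ?thesis
  proof (intro conjI ballI allI impI)
    fix i j assume "i \<in> {1..r+s}" "j \<in> {1..r+s}"
    then show "JM r \<iota> q qi rho delta S E i * JM r \<iota> q qi rho delta S E j
          = JM r \<iota> q qi rho delta S E j * JM r \<iota> q qi rho delta S E i"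
      using W.all_comm[of i j] unfolding cm_def by auto
  next
    fix c :: "(nat \<Rightarrow> nat) \<Rightarrow> 'r" and x assume "in_Srs r s c" "x \<in> gen_alg r s \<iota> S E"
    then show "x * poly_eval (r+s) \<iota> c (JM r \<iota> q qi rho delta S E)
          = poly_eval (r+s) \<iota> c (JM r \<iota> q qi rho delta S E) * x"
      by (rule W.central)
  qed
qed


end
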